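(* For every $\varepsilon>0$ there exist two Borel probability measures $\mu$ and $\nu$ on $\mathbb K$, both doubling on the dyadic cylinders, such that $$\sup_{n\ge1}\ \sup_{x\in\mathbb K}\left|\log\frac{\mu(I_n(x))}{\mu(I_{n-1}(x))}-\log\frac{\nu(I_n(x))}{\nu(I_{n-1}(x))}\right|<\varepsilon,$$ and $|\dim_*(\mu)-\dim_*(\nu)|>\frac14$.
   Context: $\mathbb K=\{0,1\}^{\mathbb N}$ with the metric in which a cylinder of generation $n$ (a set $\{x:x_1=\epsilon_1,\dots,x_n=\epsilon_n\}$) has diameter $2^{-n}$; $I_n(x)$ is the generation-$n$ cylinder containing $x$, $I_0(x)=\mathbb K$. A measure $m$ is doubling on the dyadics if there is $C>0$ with $m(\widehat I)\le C\,m(I)$ for every cylinder $I$ of generation $n\ge1$, where $\widehat I$ is the generation-$(n-1)$ cylinder containing $I$. $\dim_*(m)=\inf\{\dim_{\mathcal H}E: E\subset\mathbb K,\ m(E)>0\}$, with $\dim_{\mathcal H}$ the Hausdorff dimension. *)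

theory Defs
  imports "HOL-Probability.Probability"
begin

text \<open>Cantor space K = {0,1}^N, represented as nat \<Rightarrow> bool; coordinate x_(i+1) of the
  paper is x i here (0-based).\<close>
type_synonym cantor = "nat \<Rightarrow> bool"

text \<open>Metric: if x and y first differ at (0-based) coordinate j, they lie in a common
  cylinder of generation j (diameter 2^-j) but not of generation j+1.\<close>
definition cdist :: "cantor \<Rightarrow> cantor \<Rightarrow> real" where
  "cdist x y = (if x = y then 0 else (1/2) ^ (LEAST j. x j \<noteq> y j))"

definition cyl :: "nat \<Rightarrow> cantor \<Rightarrow> cantor set" where
  "cyl n x = {y. \<forall>i<n. y i = x i}"

definition Kborel :: "cantor measure" where
  "Kborel = sigma UNIV {U. openin (Metric_space.mtopology UNIV cdist) U}"

definition borel_prob :: "cantor measure \<Rightarrow> bool" where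
  "borel_prob m \<longleftrightarrow> prob_space m \<and> sets m = sets Kborel"

definition doubling :: "cantor measure \<Rightarrow> bool" where
  "doubling m \<longleftrightarrow> (\<exists>C>0. \<forall>n\<ge>1. \<forall>x. measure m (cyl (n-1) x) \<le> C * measure m (cyl n x))"

definition cdiam :: "cantor set \<Rightarrow> real" where
  "cdiam A = (if A = {} then 0 else Sup {cdist x y | x y. x \<in> A \<and> y \<in> A})"

definition hausdorff_delta :: "real \<Rightarrow> real \<Rightarrow> cantor set \<Rightarrow> ennreal" where
  "hausdorff_delta s \<delta> E =
     (INF U \<in> {U :: nat \<Rightarrow> cantor set. E \<subseteq> (\<Union>i. U i) \<and> (\<forall>i. cdiam (U i) \<le> \<delta>)}.
        \<Sum>i. ennreal (cdiam (U i) powr s))"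

definition hausdorff_measure :: "real \<Rightarrow> cantor set \<Rightarrow> ennreal" where
  "hausdorff_measure s E = (SUP \<delta> \<in> {0<..}. hausdorff_delta s \<delta> E)"

definition hausdorff_dim :: "cantor set \<Rightarrow> real" where
  "hausdorff_dim E = Inf {s. s \<ge> 0 \<and> hausdorff_measure s E = 0}"

definition lower_dim :: "cantor measure \<Rightarrow> real" where
  "lower_dim m = Inf {hausdorff_dim E | E. E \<in> sets m \<and> emeasure m E > 0}"

end

theory Submission
  imports Defs
begin
lemma cdist_nonneg: "0 \<le> cdist x y"
  by (simp add: cdist_def)

lemma cdist_le1: "cdist x y \<le> 1"
  by (simp add: cdist_def power_le_one)

lemma cdist_sym: "cdist x y = cdist y x"
proof -
  have "(LEAST j. x j \<noteq> y j) = (LEAST j. y j \<noteq> x j)" by metis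
  then show ?thesis by (simp add: cdist_def eq_commute)
qed

lemma cdist_zero: "cdist x y = 0 \<longleftrightarrow> x = y"
  by (simp add: cdist_def)

lemma cdist_le_agree:
  assumes "cdist x y \<le> (1/2)^k" "i < k"
  shows "x i = y i"
proof (cases "x = y")
  case False
  let ?j = "LEAST j. x j \<noteq> y j"
  have "(1/2::real)^?j \<le> (1/2)^k" using assms False by (simp add: cdist_def)
  then have "k \<le> ?j" by (simp add: power_decreasing_iff)
  then show ?thesis using assms(2) not_less_Least[of i "\<lambda>j. x j \<noteq> y j"] by auto
qed simp

lemma cdist_lt_agree:
  assumes "cdist x y < (1/2)^k"
  shows "x k = y k"
proof (cases "x = y")
  case False
  let ?j = "LEAST j. x j \<noteq> y j"
  have "(1/2::real)^?j < (1/2)^k" using assms False by (simp add: cdist_def)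
  then have "k < ?j" by (simp add: power_strict_decreasing_iff)
  then show ?thesis using not_less_Least[of k "\<lambda>j. x j \<noteq> y j"] by auto
qed simp

lemma agree_cdist_le:
  assumes "\<And>i. i < k \<Longrightarrow> x i = y i"
  shows "cdist x y \<le> (1/2)^k"
proof (cases "x = y")
  case False
  let ?j = "LEAST j. x j \<noteq> y j"
  have ex: "\<exists>j. x j \<noteq> y j" using False by auto
  have "x ?j \<noteq> y ?j" using LeastI_ex[OF ex] .
  then have "k \<le> ?j" using assms by (meson not_le)
  then show ?thesis using False by (simp add: cdist_def power_decreasing)
qed (simp add: cdist_def)

lemma cdist_triangle: "cdist x z \<le> cdist x y + cdist y z"
proof (cases "x = z")
  case True then show ?thesis by (simp add: cdist_def)
next
  case False
  let ?j = "LEAST j. x j \<noteq> z j"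
  have ex: "\<exists>j. x j \<noteq> z j" using False by auto
  have d: "x ?j \<noteq> z ?j" using LeastI_ex[OF ex] .
  have "(1/2)^?j \<le> cdist x y \<or> (1/2)^?j \<le> cdist y z"
  proof (rule ccontr)
    assume "\<not> ?thesis"
    then have "cdist x y < (1/2)^?j" "cdist y z < (1/2)^?j" by auto
    then have "x ?j = y ?j" "y ?j = z ?j" using cdist_lt_agree by blast+
    with d show False by simp
  qed
  moreover have "cdist x z = (1/2)^?j" using False by (simp add: cdist_def)
  ultimately show ?thesis using cdist_nonneg[of x y] cdist_nonneg[of y z] by linarith
qed

interpretation CM: Metric_space UNIV cdist
  by unfold_locales (auto simp: cdist_nonneg cdist_sym cdist_zero cdist_triangle)

lemma cyl_open: "openin CM.mtopology (cyl n x)"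
  unfolding CM.openin_mtopology
proof (intro conjI allI impI)
  fix y assume y: "y \<in> cyl n x"
  show "\<exists>r>0. CM.mball y r \<subseteq> cyl n x"
  proof (intro exI conjI)
    show "(0::real) < (1/2)^n" by simp
    show "CM.mball y ((1/2)^n) \<subseteq> cyl n x"
    proof
      fix z assume "z \<in> CM.mball y ((1/2)^n)"
      then have "cdist y z < (1/2)^n" by simp
      then have "\<forall>i<n. y i = z i" using cdist_le_agree[of y z n] by auto
      then show "z \<in> cyl n x" using y by (auto simp: cyl_def)
    qed
  qed
qed simp

definition trunc :: "nat \<Rightarrow> cantor \<Rightarrow> cantor" where
  "trunc n x = (\<lambda>i. i < n \<and> x i)"

definition words :: "nat \<Rightarrow> cantor set" where
  "words n = {w. \<forall>i\<ge>n. \<not> w i}"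

lemma words_eq: "words n = (\<lambda>S i. i \<in> S) ` Pow {..<n}"
proof
  show "words n \<subseteq> (\<lambda>S i. i \<in> S) ` Pow {..<n}"
  proof
    fix w assume "w \<in> words n"
    then have "w = (\<lambda>i. i \<in> {i. w i})" "{i. w i} \<in> Pow {..<n}"
      by (auto simp: words_def not_le[symmetric])
    then show "w \<in> (\<lambda>S i. i \<in> S) ` Pow {..<n}" by blast
  qed
qed (auto simp: words_def)

lemma finite_words: "finite (words n)"
  by (simp add: words_eq)

lemma trunc_words: "trunc n x \<in> words n"
  by (simp add: trunc_def words_def)

lemma cyl_trunc: "cyl n (trunc n x) = cyl n x"
  by (simp add: cyl_def trunc_def)

lemma cyl_eq_iff: "y \<in> cyl n x \<longleftrightarrow> (\<forall>i<n. y i = x i)"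
  by (simp add: cyl_def)

lemma cyl_cdist: "y \<in> cyl n x \<Longrightarrow> z \<in> cyl n x \<Longrightarrow> cdist y z \<le> (1/2)^n"
  by (rule agree_cdist_le) (simp add: cyl_def)

definition Cyls :: "cantor set set" where
  "Cyls = (\<Union>n. cyl n ` words n)"

lemma countable_Cyls: "countable Cyls"
  unfolding Cyls_def by (rule countable_UN) (auto intro: countable_finite simp: finite_words)

lemma open_Union_Cyls:
  assumes "openin CM.mtopology U"
  shows "U = \<Union>{C \<in> Cyls. C \<subseteq> U}"
proof
  show "U \<subseteq> \<Union>{C \<in> Cyls. C \<subseteq> U}"
  proof
    fix x assume x: "x \<in> U"
    then obtain r where r: "r > 0" "CM.mball x r \<subseteq> U" using assms CM.openin_mtopology by blast
    obtain n where n: "(1/2::real)^n < r" using real_arch_pow_inv[of r "1/2"] r by auto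
    have "cyl n x \<subseteq> U"
    proof
      fix y assume "y \<in> cyl n x"
      then have "cdist x y \<le> (1/2)^n" using cyl_cdist[of x n x y] by (simp add: cyl_def)
      then show "y \<in> U" using r n by auto
    qed
    moreover have "cyl n x \<in> Cyls" unfolding Cyls_def using cyl_trunc[of n x] trunc_words[of n x] by (metis UN_iff imageI UNIV_I)
    moreover have "x \<in> cyl n x" by (simp add: cyl_def)
    ultimately show "x \<in> \<Union>{C \<in> Cyls. C \<subseteq> U}" by blast
  qed
qed auto

lemma sets_Kborel: "sets Kborel = sigma_sets UNIV {U. openin CM.mtopology U}"
  unfolding Kborel_def by (rule sets_measure_of) simp

lemma space_Kborel[simp]: "space Kborel = UNIV"
  unfolding Kborel_def by (simp add: space_measure_of_conv)

lemma cyl_Kborel[measurable]: "cyl n x \<in> sets Kborel"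
  unfolding sets_Kborel using cyl_open by blast

definition depn :: "nat \<Rightarrow> (cantor \<Rightarrow> 'a) \<Rightarrow> bool" where
  "depn n f \<longleftrightarrow> (\<forall>x y. (\<forall>i<n. x i = y i) \<longrightarrow> f x = f y)"

lemma depn_Union:
  assumes "depn n (\<lambda>x. x \<in> A)"
  shows "A = (\<Union>w\<in>words n \<inter> A. cyl n w)"
proof
  show "A \<subseteq> (\<Union>w\<in>words n \<inter> A. cyl n w)"
  proof
    fix x assume x: "x \<in> A"
    have "trunc n x \<in> A" using assms x unfolding depn_def by (metis trunc_def)
    then show "x \<in> (\<Union>w\<in>words n \<inter> A. cyl n w)" using trunc_words[of n x]
      by (auto simp: cyl_def trunc_def intro!: bexI[of _ "trunc n x"])
  qed
  show "(\<Union>w\<in>words n \<inter> A. cyl n w) \<subseteq> A"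
    using assms unfolding depn_def by (auto simp: cyl_def)
qed

lemma depn_Kborel:
  assumes "depn n (\<lambda>x. x \<in> A)"
  shows "A \<in> sets Kborel"
proof -
  have "(\<Union>w\<in>words n \<inter> A. cyl n w) \<in> sets Kborel"
    by (intro sets.finite_UN) (auto simp: finite_words)
  then show ?thesis using depn_Union[OF assms] by simp
qed

definition cp :: "(nat \<Rightarrow> cantor \<Rightarrow> real) \<Rightarrow> nat \<Rightarrow> cantor \<Rightarrow> real" where
  "cp P i x = (if x i then P i x else 1 - P i x)"

definition W :: "(nat \<Rightarrow> cantor \<Rightarrow> real) \<Rightarrow> nat \<Rightarrow> cantor \<Rightarrow> real" where
  "W P n x = (\<Prod>i<n. cp P i x)"

definition Exw :: "(nat \<Rightarrow> cantor \<Rightarrow> real) \<Rightarrow> nat \<Rightarrow> (cantor \<Rightarrow> real) \<Rightarrow> real" where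
  "Exw P n f = (\<Sum>w\<in>words n. W P n w * f w)"

definition validP :: "(nat \<Rightarrow> cantor \<Rightarrow> real) \<Rightarrow> bool" where
  "validP P \<longleftrightarrow> (\<forall>i x. 0 < P i x \<and> P i x < 1) \<and> (\<forall>i. depn i (P i))"

lemma W_0[simp]: "W P 0 x = 1" by (simp add: W_def)

lemma W_Suc: "W P (Suc n) x = W P n x * cp P n x"
  by (simp add: W_def)

lemma cp_pos: "validP P \<Longrightarrow> 0 < cp P i x"
  by (auto simp: validP_def cp_def)

lemma W_pos: "validP P \<Longrightarrow> 0 < W P n x"
  by (induction n) (auto simp: W_Suc cp_pos)

lemma validP_dep: "validP P \<Longrightarrow> (\<And>j. j < i \<Longrightarrow> x j = y j) \<Longrightarrow> P i x = P i y"
  by (auto simp: validP_def depn_def)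

lemma cp_dep: "validP P \<Longrightarrow> (\<And>j. j \<le> i \<Longrightarrow> x j = y j) \<Longrightarrow> cp P i x = cp P i y"
  using validP_dep[of P i x y] by (simp add: cp_def)

lemma W_dep: "validP P \<Longrightarrow> (\<And>j. j < n \<Longrightarrow> x j = y j) \<Longrightarrow> W P n x = W P n y"
  unfolding W_def by (intro prod.cong refl cp_dep) auto

lemma words_Suc: "words (Suc n) = words n \<union> (\<lambda>w. w(n:=True)) ` words n"
proof
  show "words (Suc n) \<subseteq> words n \<union> (\<lambda>w. w(n:=True)) ` words n"
  proof
    fix w assume w: "w \<in> words (Suc n)"
    show "w \<in> words n \<union> (\<lambda>w. w(n:=True)) ` words n"
    proof (cases "w n")
      case True
      then have "w = (w(n:=False))(n:=True)" "w(n:=False) \<in> words n" using w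
        by (auto simp: words_def fun_upd_idem)
      then show ?thesis by blast
    next
      case False
      have "w \<in> words n" unfolding words_def
      proof (intro CollectI allI impI)
        fix i assume "n \<le> i"
        then show "\<not> w i" using w False by (cases "i = n") (auto simp: words_def)
      qed
      then show ?thesis by blast
    qed
  qed
qed (auto simp: words_def)

lemma sum_words_Suc:
  "(\<Sum>w\<in>words (Suc n). f w) = (\<Sum>w\<in>words n. f w + f (w(n:=True)))"
proof -
  have inj: "inj_on (\<lambda>w. w(n:=True)) (words n)"
  proof (rule inj_onI)
    fix v w
    assume vw: "v \<in> words n" "w \<in> words n" and e: "v(n:=True) = w(n:=True)"
    show "v = w"
    proof
      fix i
      show "v i = w i"
      proof (cases "i = n")
        case True then show ?thesis using vw by (simp add: words_def)
      next
        case False then show ?thesis using fun_cong[OF e, of i] by simp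
      qed
    qed
  qed
  have disj: "words n \<inter> (\<lambda>w. w(n:=True)) ` words n = {}" by (auto simp: words_def)
  have "(\<Sum>w\<in>words (Suc n). f w) = (\<Sum>w\<in>words n. f w) + (\<Sum>w\<in>(\<lambda>w. w(n:=True)) ` words n. f w)"
    unfolding words_Suc by (rule sum.union_disjoint) (auto simp: finite_words disj)
  also have "(\<Sum>w\<in>(\<lambda>w. w(n:=True)) ` words n. f w) = (\<Sum>w\<in>words n. f (w(n:=True)))"
    by (simp add: sum.reindex[OF inj])
  finally show ?thesis by (simp add: sum.distrib)
qed

lemma Exw_step:
  assumes "validP P"
  shows "Exw P (Suc n) f = (\<Sum>w\<in>words n. W P n w * ((1 - P n w) * f w + P n w * f (w(n:=True))))"
proof -
  have "Exw P (Suc n) f = (\<Sum>w\<in>words n. W P (Suc n) w * f w + W P (Suc n) (w(n:=True)) * f (w(n:=True)))"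
    unfolding Exw_def by (rule sum_words_Suc)
  also have "\<dots> = (\<Sum>w\<in>words n. W P n w * ((1 - P n w) * f w + P n w * f (w(n:=True))))"
  proof (rule sum.cong[OF refl])
    fix w assume w: "w \<in> words n"
    then have wn: "\<not> w n" by (simp add: words_def)
    have "W P n (w(n:=True)) = W P n w" by (rule W_dep[OF assms]) simp
    moreover have "P n (w(n:=True)) = P n w" by (rule validP_dep[OF assms]) simp
    ultimately show "W P (Suc n) w * f w + W P (Suc n) (w(n:=True)) * f (w(n:=True)) =
       W P n w * ((1 - P n w) * f w + P n w * f (w(n:=True)))"
      using wn by (simp add: W_Suc cp_def algebra_simps)
  qed
  finally show ?thesis .
qed

lemma Exw_Suc_depn:
  assumes "validP P" "depn n f"
  shows "Exw P (Suc n) f = Exw P n f"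
proof -
  have fw: "\<And>w. f (w(n:=True)) = f w" using assms(2) unfolding depn_def by auto
  have "Exw P (Suc n) f = (\<Sum>w\<in>words n. W P n w * ((1 - P n w) * f w + P n w * f (w(n:=True))))"
    by (rule Exw_step[OF assms(1)])
  also have "\<dots> = Exw P n f" unfolding Exw_def fw by (intro sum.cong refl) (simp add: algebra_simps)
  finally show ?thesis .
qed

lemma depn_mono: "depn n f \<Longrightarrow> n \<le> m \<Longrightarrow> depn m f"
  unfolding depn_def by auto

lemma Exw_depn:
  assumes "validP P" "depn n f" "n \<le> m"
  shows "Exw P m f = Exw P n f"
  using assms(3)
proof (induction m rule: dec_induct)
  case (step m)
  then show ?case using Exw_Suc_depn[OF assms(1) depn_mono[OF assms(2) step(1)]] by simp
qed simp

lemma Exw_one: "validP P \<Longrightarrow> Exw P n (\<lambda>_. 1) = 1"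
proof (induction n)
  case 0
  have "words 0 = {\<lambda>_. False}" by (auto simp: words_def)
  then show ?case by (simp add: Exw_def)
next
  case (Suc n)
  have "depn n (\<lambda>_. 1::real)" by (simp add: depn_def)
  then show ?case using Exw_Suc_depn[OF Suc(2)] Suc by simp
qed

lemma sum_W: "validP P \<Longrightarrow> (\<Sum>w\<in>words n. W P n w) = 1"
  using Exw_one[of P n] by (simp add: Exw_def)

lemma Exw_mono: "validP P \<Longrightarrow> (\<And>x. f x \<le> g x) \<Longrightarrow> Exw P n f \<le> Exw P n g"
  unfolding Exw_def by (intro sum_mono mult_left_mono) (auto intro: less_imp_le W_pos)

lemma Exw_nonneg: "validP P \<Longrightarrow> (\<And>x. 0 \<le> f x) \<Longrightarrow> 0 \<le> Exw P n f"
  using Exw_mono[of P "\<lambda>_. 0" f n] by (simp add: Exw_def)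

lemma Exw_add: "Exw P n (\<lambda>x. f x + g x) = Exw P n f + Exw P n g"
  unfolding Exw_def by (simp add: algebra_simps sum.distrib)

lemma Exw_cmult: "Exw P n (\<lambda>x. c * f x) = c * Exw P n f"
  unfolding Exw_def by (simp add: algebra_simps sum_distrib_left)

definition cnt :: "bool \<Rightarrow> nat \<Rightarrow> nat \<Rightarrow> cantor \<Rightarrow> nat" where
  "cnt b a l x = card {i \<in> {a..<a+l}. x i = b}"

lemma cnt_0[simp]: "cnt b a 0 x = 0" by (simp add: cnt_def)

lemma cnt_Suc: "cnt b a (Suc l) x = cnt b a l x + (if x (a+l) = b then 1 else 0)"
proof -
  have "{i \<in> {a..<a+Suc l}. x i = b} = {i \<in> {a..<a+l}. x i = b} \<union> (if x (a+l) = b then {a+l} else {})"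
    by (auto simp: less_Suc_eq)
  then show ?thesis by (auto simp: cnt_def)
qed

lemma cnt_dep: "(\<And>i. a \<le> i \<Longrightarrow> i < a + l \<Longrightarrow> x i = y i) \<Longrightarrow> cnt b a l x = cnt b a l y"
  unfolding cnt_def by (intro arg_cong[where f=card]) auto

lemma chernoff_exp:
  assumes P: "validP P" and g: "depn a g" "\<And>x. 0 \<le> g x"
    and r: "\<And>i x. a \<le> i \<Longrightarrow> i < a + L \<Longrightarrow> g x \<noteq> 0 \<Longrightarrow> P i x = (if b then r else 1 - r)"
    and lam: "0 \<le> (lam::real)" and l: "l \<le> L"
  shows "Exw P (a+l) (\<lambda>x. g x * lam ^ cnt b a l x) = (1 - r + r * lam) ^ l * Exw P a g"
  using l
proof (induction l)
  case 0 then show ?case by simp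
next
  case (Suc l)
  have IH: "Exw P (a+l) (\<lambda>x. g x * lam ^ cnt b a l x) = (1 - r + r * lam) ^ l * Exw P a g"
    using Suc by simp
  have "Exw P (a + Suc l) (\<lambda>x. g x * lam ^ cnt b a (Suc l) x) =
      (\<Sum>w\<in>words (a+l). W P (a+l) w * ((1 - P (a+l) w) * (g w * lam ^ cnt b a (Suc l) w)
         + P (a+l) w * (g (w(a+l:=True)) * lam ^ cnt b a (Suc l) (w(a+l:=True)))))"
    using Exw_step[OF P, of "a+l"] by simp
  also have "\<dots> = (\<Sum>w\<in>words (a+l). W P (a+l) w * ((1 - r + r * lam) * (g w * lam ^ cnt b a l w)))"
  proof (rule sum.cong[OF refl])
    fix w assume w: "w \<in> words (a+l)"
    then have wn: "\<not> w (a+l)" by (simp add: words_def)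
    have gw: "g (w(a+l:=True)) = g w" using g(1) unfolding depn_def by auto
    have c1: "cnt b a l (w(a+l:=True)) = cnt b a l w" by (rule cnt_dep) auto
    show "W P (a+l) w * ((1 - P (a+l) w) * (g w * lam ^ cnt b a (Suc l) w)
         + P (a+l) w * (g (w(a+l:=True)) * lam ^ cnt b a (Suc l) (w(a+l:=True)))) =
         W P (a+l) w * ((1 - r + r * lam) * (g w * lam ^ cnt b a l w))"
    proof (cases "g w = 0")
      case True then show ?thesis using gw by simp
    next
      case False
      have Pv: "P (a+l) w = (if b then r else 1 - r)" using r[of "a+l" w] False Suc(2) by simp
      have cS1: "cnt b a (Suc l) w = cnt b a l w + (if b then 0 else 1)" using wn by (simp add: cnt_Suc)
      have cS2: "cnt b a (Suc l) (w(a+l:=True)) = cnt b a l w + (if b then 1 else 0)"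
        using c1 by (simp add: cnt_Suc)
      show ?thesis
      proof (cases b)
        case True
        then show ?thesis unfolding Pv cS1 cS2 gw by (simp add: algebra_simps)
      next
        case False
        then show ?thesis unfolding Pv cS1 cS2 gw by (simp add: algebra_simps)
      qed
    qed
  qed
  also have "\<dots> = (1 - r + r * lam) * Exw P (a+l) (\<lambda>x. g x * lam ^ cnt b a l x)"
    unfolding Exw_def by (simp add: sum_distrib_left algebra_simps)
  finally show ?case using IH by simp
qed

lemma chernoff:
  assumes P: "validP P" and g: "depn a g" "\<And>x. 0 \<le> g x"
    and r: "\<And>i x. a \<le> i \<Longrightarrow> i < a + L \<Longrightarrow> g x \<noteq> 0 \<Longrightarrow> P i x = (if b then r else 1 - r)"
    and lam: "1 \<le> (lam::real)"
  shows "Exw P (a+L) (\<lambda>x. if j \<le> cnt b a L x then g x else 0) \<le> (1 - r + r * lam) ^ L / lam ^ j * Exw P a g"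
proof -
  have "Exw P (a+L) (\<lambda>x. if j \<le> cnt b a L x then g x else 0) \<le> Exw P (a+L) (\<lambda>x. (g x * lam ^ cnt b a L x) / lam ^ j)"
  proof (rule Exw_mono[OF P])
    fix x
    show "(if j \<le> cnt b a L x then g x else 0) \<le> (g x * lam ^ cnt b a L x) / lam ^ j"
    proof (cases "j \<le> cnt b a L x")
      case True
      then have "lam ^ j \<le> lam ^ cnt b a L x" using lam by (simp add: power_increasing)
      then have "1 \<le> lam ^ cnt b a L x / lam ^ j" using lam by simp
      then have "g x * 1 \<le> g x * (lam ^ cnt b a L x / lam ^ j)" using g(2) by (intro mult_left_mono) auto
      then show ?thesis using True by simp
    next
      case False then show ?thesis using g(2) lam by simp
    qed
  qed
  also have "\<dots> = Exw P (a+L) (\<lambda>x. g x * lam ^ cnt b a L x) / lam ^ j"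
    using Exw_cmult[of P "a+L" "1/lam^j" "\<lambda>x. g x * lam ^ cnt b a L x"] by simp
  also have "\<dots> = (1 - r + r * lam) ^ L / lam ^ j * Exw P a g"
    using chernoff_exp[OF P g r, where lam=lam and l=L] lam by simp
  finally show ?thesis .
qed

definition Aleft :: "(nat \<Rightarrow> cantor \<Rightarrow> real) \<Rightarrow> nat \<Rightarrow> cantor \<Rightarrow> real" where
  "Aleft P n x = (\<Sum>i<n. if x i then W P i x * (1 - P i x) else 0)"

primrec Dg :: "(nat \<Rightarrow> cantor \<Rightarrow> real) \<Rightarrow> real \<Rightarrow> nat \<Rightarrow> cantor" where
  "Dg P u 0 = (\<lambda>_. False)"
| "Dg P u (Suc n) = (Dg P u n)(n := Aleft P n (Dg P u n) + W P n (Dg P u n) * (1 - P n (Dg P u n)) \<le> u)"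

definition Fm :: "(nat \<Rightarrow> cantor \<Rightarrow> real) \<Rightarrow> real \<Rightarrow> cantor" where
  "Fm P u = (\<lambda>i. Dg P u (Suc i) i)"

definition Jint :: "(nat \<Rightarrow> cantor \<Rightarrow> real) \<Rightarrow> nat \<Rightarrow> cantor \<Rightarrow> real set" where
  "Jint P n x = {Aleft P n x ..< Aleft P n x + W P n x}"

lemma Aleft_Suc: "Aleft P (Suc n) x = Aleft P n x + (if x n then W P n x * (1 - P n x) else 0)"
  by (simp add: Aleft_def)

lemma Aleft_dep: "validP P \<Longrightarrow> (\<And>j. j < n \<Longrightarrow> x j = y j) \<Longrightarrow> Aleft P n x = Aleft P n y"
  unfolding Aleft_def
proof (intro sum.cong refl)
  fix i assume P: "validP P" and a: "\<And>j. j < n \<Longrightarrow> x j = y j" and i: "i \<in> {..<n}"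
  have "W P i x = W P i y" using i a by (intro W_dep[OF P]) auto
  moreover have "P i x = P i y" using i a by (intro validP_dep[OF P]) auto
  moreover have "x i = y i" using i a by auto
  ultimately show "(if x i then W P i x * (1 - P i x) else 0) = (if y i then W P i y * (1 - P i y) else 0)"
    by simp
qed

lemma Jint_dep: "validP P \<Longrightarrow> (\<And>j. j < n \<Longrightarrow> x j = y j) \<Longrightarrow> Jint P n x = Jint P n y"
  unfolding Jint_def using Aleft_dep[of P n x y] W_dep[of P n x y] by simp


lemma Dg_Suc_stable: "i < n \<Longrightarrow> Dg P u (Suc n) i = Dg P u n i"
  by simp

lemma Dg_stable: "n \<le> m \<Longrightarrow> i < n \<Longrightarrow> Dg P u m i = Dg P u n i"
proof (induction m rule: dec_induct)
  case base then show ?case by simp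
next
  case (step m) then show ?case by simp
qed

lemma Fm_agree: "i < n \<Longrightarrow> Fm P u i = Dg P u n i"
  unfolding Fm_def using Dg_stable[of "Suc i" n i P u] by simp

lemma Dg_in:
  assumes P: "validP P" and u: "0 \<le> u" "u < 1"
  shows "u \<in> Jint P n (Dg P u n)"
proof (induction n)
  case 0 then show ?case using u by (simp add: Jint_def Aleft_def)
next
  case (Suc n)
  let ?x = "Dg P u n"
  let ?t = "Aleft P n ?x + W P n ?x * (1 - P n ?x) \<le> u"
  have x': "Dg P u (Suc n) = ?x(n := ?t)" by simp
  have ag: "\<And>j. j < n \<Longrightarrow> (?x(n := ?t)) j = ?x j" by simp
  have A: "\<And>b. Aleft P n (?x(n := b)) = Aleft P n ?x" by (rule Aleft_dep[OF P]) simp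
  have Wn: "\<And>b. W P n (?x(n := b)) = W P n ?x" by (rule W_dep[OF P]) simp
  have Pn: "\<And>b. P n (?x(n := b)) = P n ?x" by (rule validP_dep[OF P]) simp
  have IH: "Aleft P n ?x \<le> u" "u < Aleft P n ?x + W P n ?x" using Suc by (auto simp: Jint_def)
  show ?case
  proof (cases ?t)
    case True
    then show ?thesis unfolding x' Jint_def using IH
      by (simp add: Aleft_Suc W_Suc A Wn Pn cp_def algebra_simps)
  next
    case False
    then show ?thesis unfolding x' Jint_def using IH
      by (simp add: Aleft_Suc W_Suc A Wn Pn cp_def algebra_simps)
  qed
qed

lemma Fm_in:
  assumes P: "validP P" and u: "0 \<le> u" "u < 1"
  shows "u \<in> Jint P n (Fm P u)"
proof -
  have "Jint P n (Fm P u) = Jint P n (Dg P u n)" by (rule Jint_dep[OF P]) (simp add: Fm_agree)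
  then show ?thesis using Dg_in[OF assms] by simp
qed

lemma Jint_Suc_sub: "validP P \<Longrightarrow> Jint P (Suc n) x \<subseteq> Jint P n x"
proof -
  assume P: "validP P"
  have "0 < W P n x" "0 < P n x" "P n x < 1" using W_pos[OF P] P by (auto simp: validP_def)
  then show ?thesis
    unfolding Jint_def by (auto simp: Aleft_Suc W_Suc cp_def algebra_simps mult_pos_pos)
qed


lemma Jint_mono: "n \<le> m \<Longrightarrow> validP P \<Longrightarrow> Jint P m x \<subseteq> Jint P n x"
proof (induction m rule: dec_induct)
  case base then show ?case by simp
next
  case (step m) then show ?case using Jint_Suc_sub[of P m x] by blast
qed

lemma Jint_sub01: "validP P \<Longrightarrow> Jint P n x \<subseteq> {0..<1}"
  using Jint_mono[of 0 n P x] by (simp add: Jint_def Aleft_def)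

lemma Jint_disj:
  assumes P: "validP P" and d: "i < n" "x i \<noteq> y i"
  shows "Jint P n x \<inter> Jint P n y = {}"
proof -
  have ex: "\<exists>i. x i \<noteq> y i" using d by auto
  define j where "j = (LEAST i. x i \<noteq> y i)"
  have jd: "x j \<noteq> y j" unfolding j_def using LeastI_ex[OF ex] .
  have jle: "j \<le> i" unfolding j_def using d(2) by (rule Least_le)
  have ag: "\<And>k. k < j \<Longrightarrow> x k = y k" unfolding j_def using not_less_Least by blast
  have A: "Aleft P j x = Aleft P j y" by (rule Aleft_dep[OF P ag])
  have Wj: "W P j x = W P j y" by (rule W_dep[OF P ag])
  have Pj: "P j x = P j y" by (rule validP_dep[OF P ag])
  have "Jint P (Suc j) x \<inter> Jint P (Suc j) y = {}"
  proof (cases "x j")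
    case True
    then have "\<not> y j" using jd by simp
    then show ?thesis using True unfolding Jint_def
      by (auto simp: Aleft_Suc W_Suc cp_def A Wj Pj algebra_simps)
  next
    case False
    then have "y j" using jd by simp
    then show ?thesis using False unfolding Jint_def
      by (auto simp: Aleft_Suc W_Suc cp_def A Wj Pj algebra_simps)
  qed
  moreover have "Suc j \<le> n" using jle d by simp
  ultimately show ?thesis using Jint_mono[of "Suc j" n P x] Jint_mono[of "Suc j" n P y] P by blast
qed

lemma Fm_preimage:
  assumes P: "validP P"
  shows "Fm P -` cyl n x \<inter> {0..<1} = Jint P n x"
proof
  show "Fm P -` cyl n x \<inter> {0..<1} \<subseteq> Jint P n x"
  proof
    fix u assume u: "u \<in> Fm P -` cyl n x \<inter> {0..<1}"
    then have "Jint P n (Fm P u) = Jint P n x" by (intro Jint_dep[OF P]) (auto simp: cyl_def)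
    then show "u \<in> Jint P n x" using Fm_in[OF P, of u n] u by auto
  qed
  show "Jint P n x \<subseteq> Fm P -` cyl n x \<inter> {0..<1}"
  proof
    fix u assume u: "u \<in> Jint P n x"
    then have u01: "u \<in> {0..<1}" using Jint_sub01[OF P] by blast
    have "Fm P u \<in> cyl n x"
    proof (rule ccontr)
      assume "Fm P u \<notin> cyl n x"
      then obtain i where "i < n" "Fm P u i \<noteq> x i" by (auto simp: cyl_def)
      then have "Jint P n (Fm P u) \<inter> Jint P n x = {}" by (rule Jint_disj[OF P])
      then show False using u Fm_in[OF P, of u n] u01 by auto
    qed
    then show "u \<in> Fm P -` cyl n x \<inter> {0..<1}" using u01 by simp
  qed
qed

definition M0 :: "real measure" where
  "M0 = restrict_space lborel {0..<1}"

definition mkm :: "(nat \<Rightarrow> cantor \<Rightarrow> real) \<Rightarrow> cantor measure" where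
  "mkm P = distr M0 Kborel (Fm P)"

lemma space_M0: "space M0 = {0..<1}"
  by (simp add: M0_def space_restrict_space)

lemma sets_M0_iff: "A \<in> sets M0 \<longleftrightarrow> A \<subseteq> {0..<1} \<and> A \<in> sets borel"
  unfolding M0_def by (subst sets_restrict_space_iff) auto

lemma prob_M0: "prob_space M0"
  unfolding M0_def by (rule prob_space_restrict_space) auto

lemma Jint_sets: "validP P \<Longrightarrow> Jint P n x \<in> sets M0"
  using Jint_sub01[of P n x] by (simp add: sets_M0_iff Jint_def)

lemma Fm_measurable: assumes P: "validP P" shows "Fm P \<in> M0 \<rightarrow>\<^sub>M Kborel"
  unfolding Kborel_def
proof (rule measurable_measure_of)
  show "Fm P \<in> space M0 \<rightarrow> UNIV" by simp
  fix U assume "U \<in> {U. openin CM.mtopology U}"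
  then have U: "U = \<Union>{C \<in> Cyls. C \<subseteq> U}" using open_Union_Cyls by blast
  have "Fm P -` U \<inter> space M0 = (\<Union>C\<in>{C \<in> Cyls. C \<subseteq> U}. Fm P -` C \<inter> {0..<1})"
    by (subst U) (auto simp: space_M0)
  also have "\<dots> \<in> sets M0"
  proof (rule sets.countable_UN')
    show "countable {C \<in> Cyls. C \<subseteq> U}" using countable_Cyls by (rule countable_subset[rotated]) auto
    show "(\<lambda>C. Fm P -` C \<inter> {0..<1}) ` {C \<in> Cyls. C \<subseteq> U} \<subseteq> sets M0"
    proof
      fix V assume "V \<in> (\<lambda>C. Fm P -` C \<inter> {0..<1}) ` {C \<in> Cyls. C \<subseteq> U}"
      then obtain n w where "V = Fm P -` cyl n w \<inter> {0..<1}" by (auto simp: Cyls_def)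
      then show "V \<in> sets M0" using Fm_preimage[OF P] Jint_sets[OF P] by simp
    qed
  qed
  finally show "Fm P -` U \<inter> space M0 \<in> sets M0" .
qed auto

lemma mkm_prob: "validP P \<Longrightarrow> prob_space (mkm P)"
  unfolding mkm_def using prob_M0 Fm_measurable by (intro prob_space.prob_space_distr) auto

lemma sets_mkm: "sets (mkm P) = sets Kborel"
  by (simp add: mkm_def)

lemma mkm_cyl: assumes P: "validP P" shows "measure (mkm P) (cyl n x) = W P n x"
proof -
  have "emeasure (mkm P) (cyl n x) = emeasure M0 (Fm P -` cyl n x \<inter> space M0)"
    unfolding mkm_def by (rule emeasure_distr[OF Fm_measurable[OF P]]) simp
  also have "\<dots> = emeasure M0 (Jint P n x)" using Fm_preimage[OF P] by (simp add: space_M0)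
  also have "\<dots> = emeasure lborel (Jint P n x)"
    unfolding M0_def using Jint_sub01[OF P] by (intro emeasure_restrict_space) auto
  also have "\<dots> = ennreal (W P n x)" unfolding Jint_def using W_pos[OF P, of n x] by simp
  finally show ?thesis using W_pos[OF P, of n x] by (simp add: measure_def)
qed

lemma cyl_disj: "w \<in> words n \<Longrightarrow> v \<in> words n \<Longrightarrow> w \<noteq> v \<Longrightarrow> cyl n w \<inter> cyl n v = {}"
proof -
  assume w: "w \<in> words n" and v: "v \<in> words n" and ne: "w \<noteq> v"
  then obtain i where "w i \<noteq> v i" by auto
  moreover have "i < n" using w v \<open>w i \<noteq> v i\<close> by (auto simp: words_def not_less[symmetric])
  ultimately show ?thesis by (auto simp: cyl_def)
qed

lemma mkm_depn:
  assumes P: "validP P" and A: "depn n (\<lambda>x. x \<in> A)"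
  shows "measure (mkm P) A = Exw P n (indicator A)"
proof -
  interpret prob_space "mkm P" by (rule mkm_prob[OF P])
  have "measure (mkm P) A = measure (mkm P) (\<Union>w\<in>words n \<inter> A. cyl n w)"
    using depn_Union[OF A] by simp
  also have "\<dots> = (\<Sum>w\<in>words n \<inter> A. measure (mkm P) (cyl n w))"
  proof (rule measure_finite_Union)
    show "finite (words n \<inter> A)" by (simp add: finite_words)
    show "cyl n ` (words n \<inter> A) \<subseteq> sets (mkm P)" by (auto simp: sets_mkm)
    show "disjoint_family_on (cyl n) (words n \<inter> A)"
      unfolding disjoint_family_on_def using cyl_disj by blast
    show "\<And>i. i \<in> words n \<inter> A \<Longrightarrow> emeasure (mkm P) (cyl n i) \<noteq> \<infinity>"
      by simp
  qed
  also have "\<dots> = (\<Sum>w\<in>words n \<inter> A. W P n w)" by (simp add: mkm_cyl[OF P])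
  also have "\<dots> = Exw P n (indicator A)"
    unfolding Exw_def by (simp add: sum.inter_restrict[OF finite_words] indicator_def of_bool_def if_distrib cong: if_cong)
  finally show ?thesis .
qed

lemma cdist_bdd: "bdd_above {cdist x y | x y. x \<in> A \<and> y \<in> A}"
  by (rule bdd_aboveI[of _ 1]) (auto simp: cdist_le1)

lemma cdiam_upper: "y \<in> U \<Longrightarrow> z \<in> U \<Longrightarrow> cdist y z \<le> cdiam U"
  unfolding cdiam_def by (auto intro!: cSup_upper cdist_bdd)

lemma cdiam_least:
  assumes H: "\<And>y z. y \<in> U \<Longrightarrow> z \<in> U \<Longrightarrow> cdist y z \<le> c" and c: "0 \<le> c"
  shows "cdiam U \<le> c"
proof (cases "U = {}")
  case False
  then have ne: "{cdist x y | x y. x \<in> U \<and> y \<in> U} \<noteq> {}" by auto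
  have "Sup {cdist x y | x y. x \<in> U \<and> y \<in> U} \<le> c"
    by (rule cSup_least[OF ne]) (use H in blast)
  then show ?thesis unfolding cdiam_def using False by simp
qed (simp add: cdiam_def c)

lemma cdiam_nonneg: "0 \<le> cdiam U"
proof (cases "U = {}")
  case False
  then obtain y where "y \<in> U" by auto
  then show ?thesis using cdiam_upper[of y U y] cdist_nonneg[of y y] by linarith
qed (simp add: cdiam_def)

lemma cdiam_le1: "cdiam U \<le> 1"
  by (rule cdiam_least) (auto simp: cdist_le1)

lemma cdiam_empty[simp]: "cdiam {} = 0"
  by (simp add: cdiam_def)

lemma cdiam_cyl: "cdiam (cyl n x) \<le> (1/2)^n"
  by (rule cdiam_least) (auto intro: cyl_cdist)

lemma hd_finite_cover:
  assumes fin: "finite \<U>" and cov: "E \<subseteq> \<Union>\<U>" and d: "\<And>U. U \<in> \<U> \<Longrightarrow> cdiam U \<le> \<delta>" and d0: "0 \<le> \<delta>"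
  shows "hausdorff_delta s \<delta> E \<le> ennreal (\<Sum>U\<in>\<U>. cdiam U powr s)"
proof -
  obtain h where h: "bij_betw h {0..<card \<U>} \<U>" using ex_bij_betw_nat_finite[OF fin] by blast
  define V where "V i = (if i < card \<U> then h i else {})" for i
  have "E \<subseteq> (\<Union>i. V i)"
  proof
    fix x assume "x \<in> E"
    then obtain U where U: "U \<in> \<U>" "x \<in> U" using cov by blast
    then obtain i where "i \<in> {0..<card \<U>}" "h i = U" using h by (metis bij_betw_iff_bijections)
    then show "x \<in> (\<Union>i. V i)" using U by (auto simp: V_def)
  qed
  moreover have "\<forall>i. cdiam (V i) \<le> \<delta>"
  proof
    fix i show "cdiam (V i) \<le> \<delta>"
      using d d0 bij_betw_apply[OF h, of i] by (auto simp: V_def)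
  qed
  ultimately have "hausdorff_delta s \<delta> E \<le> (\<Sum>i. ennreal (cdiam (V i) powr s))"
    unfolding hausdorff_delta_def by (intro INF_lower) auto
  also have "(\<Sum>i. ennreal (cdiam (V i) powr s)) = (\<Sum>i\<in>{0..<card \<U>}. ennreal (cdiam (V i) powr s))"
    by (rule suminf_finite) (auto simp: V_def)
  also have "\<dots> = (\<Sum>i\<in>{0..<card \<U>}. ennreal (cdiam (h i) powr s))"
    by (simp add: V_def)
  also have "\<dots> = (\<Sum>U\<in>\<U>. ennreal (cdiam U powr s))"
    using sum.reindex_bij_betw[OF h, of "\<lambda>U. ennreal (cdiam U powr s)"] by simp
  also have "\<dots> = ennreal (\<Sum>U\<in>\<U>. cdiam U powr s)" by simp
  finally show ?thesis .
qed

lemma hm_zero: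
  assumes "\<And>\<delta> e. 0 < \<delta> \<Longrightarrow> 0 < e \<Longrightarrow> hausdorff_delta s \<delta> E \<le> ennreal e"
  shows "hausdorff_measure s E = 0"
proof -
  have "\<And>\<delta>. 0 < \<delta> \<Longrightarrow> hausdorff_delta s \<delta> E = 0"
  proof -
    fix \<delta> :: real assume "0 < \<delta>"
    have "hausdorff_delta s \<delta> E \<le> 0"
      by (rule ennreal_le_epsilon) (use assms \<open>0 < \<delta>\<close> in auto)
    then show "hausdorff_delta s \<delta> E = 0" by simp
  qed
  then show ?thesis unfolding hausdorff_measure_def by simp
qed

lemma card_words_le: "card (words n) \<le> 2^n"
proof -
  have "card (words n) \<le> card (Pow {..<n})" unfolding words_eq by (rule card_image_le) simp
  then show ?thesis by (simp add: card_Pow)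
qed

lemma hm2_zero: "hausdorff_measure 2 E = 0"
proof (rule hm_zero)
  fix \<delta> e :: real assume d: "0 < \<delta>" and e: "0 < e"
  obtain n where n: "(1/2::real)^n < min \<delta> e" using real_arch_pow_inv[of "min \<delta> e" "1/2"] d e by auto
  have "hausdorff_delta 2 \<delta> E \<le> ennreal (\<Sum>U\<in>cyl n ` words n. cdiam U powr 2)"
  proof (rule hd_finite_cover)
    show "finite (cyl n ` words n)" by (simp add: finite_words)
    show "E \<subseteq> \<Union> (cyl n ` words n)"
    proof
      fix x assume "x \<in> E"
      have "x \<in> cyl n (trunc n x)" by (simp add: cyl_def trunc_def)
      then show "x \<in> \<Union> (cyl n ` words n)" using trunc_words by blast
    qed
    show "\<And>U. U \<in> cyl n ` words n \<Longrightarrow> cdiam U \<le> \<delta>"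
    proof -
      fix U assume "U \<in> cyl n ` words n"
      then obtain w where "U = cyl n w" by auto
      then show "cdiam U \<le> \<delta>" using cdiam_cyl[of n w] n by simp
    qed
  qed (use d in simp)
  also have "\<dots> \<le> ennreal e"
  proof (rule ennreal_leI)
    let ?c = "(1/2::real)^n"
    have c0: "0 < ?c" by simp
    have "(\<Sum>U\<in>cyl n ` words n. cdiam U powr 2) \<le> (\<Sum>U\<in>cyl n ` words n. ?c powr 2)"
      by (intro sum_mono powr_mono2) (auto intro: cdiam_nonneg cdiam_cyl)
    also have "\<dots> = real (card (cyl n ` words n)) * ?c^2"
      using powr_numeral[OF less_imp_le[OF c0], of "num.Bit0 num.One"] by simp
    also have "\<dots> \<le> 2^n * ?c^2"
    proof (rule mult_right_mono)
      have "card (cyl n ` words n) \<le> 2^n"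
        using card_image_le[OF finite_words, of "cyl n" n] card_words_le[of n] by linarith
      then show "real (card (cyl n ` words n)) \<le> 2^n"
        by (metis of_nat_le_iff of_nat_numeral of_nat_power)
    qed simp
    also have "(2::real)^n * ?c^2 = ?c"
    proof -
      have "(2::real)^n * ?c = 1" by (simp add: power_mult_distrib[symmetric])
      then show ?thesis by (simp add: power2_eq_square mult.assoc[symmetric])
    qed
    also have "\<dots> \<le> e" using n by simp
    finally show "(\<Sum>U\<in>cyl n ` words n. cdiam U powr 2) \<le> e" .
  qed
  finally show "hausdorff_delta 2 \<delta> E \<le> ennreal e" .
qed

lemma hdim_set_ne: "{s. s \<ge> 0 \<and> hausdorff_measure s E = 0} \<noteq> {}"
proof -
  have "(2::real) \<in> {s. s \<ge> 0 \<and> hausdorff_measure s E = 0}" using hm2_zero[of E] by simp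
  then show ?thesis by blast
qed

lemma hdim_nonneg: "0 \<le> hausdorff_dim E"
  unfolding hausdorff_dim_def by (rule cInf_greatest[OF hdim_set_ne]) auto

lemma hdim_le: "0 \<le> s \<Longrightarrow> hausdorff_measure s E = 0 \<Longrightarrow> hausdorff_dim E \<le> s"
  unfolding hausdorff_dim_def by (rule cInf_lower) (auto intro: bdd_belowI[of _ 0])

lemma hdim_ge: "(\<And>s. 0 \<le> s \<Longrightarrow> s < c \<Longrightarrow> hausdorff_measure s E \<noteq> 0) \<Longrightarrow> c \<le> hausdorff_dim E"
  unfolding hausdorff_dim_def by (rule cInf_greatest[OF hdim_set_ne]) (auto simp: not_less[symmetric])

definition kk :: "real \<Rightarrow> nat" where
  "kk d = (LEAST n. (1/2::real)^(Suc n) < d)"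

lemma kk_props:
  assumes "0 < d" "d \<le> 1"
  shows "d \<le> (1/2)^(kk d)" "(1/2)^(Suc (kk d)) < d"
proof -
  obtain n where n: "(1/2::real)^n < d" using real_arch_pow_inv[of d "1/2"] assms by auto
  have ex: "\<exists>n. (1/2::real)^(Suc n) < d"
  proof (intro exI[of _ n])
    have "(1/2::real)^(Suc n) \<le> (1/2)^n" by (simp add: power_decreasing)
    then show "(1/2::real)^(Suc n) < d" using n by linarith
  qed
  show "(1/2)^(Suc (kk d)) < d" unfolding kk_def by (rule LeastI_ex[OF ex])
  show "d \<le> (1/2)^(kk d)"
  proof (cases "kk d")
    case 0 then show ?thesis using assms by simp
  next
    case (Suc j)
    then have "\<not> (1/2::real)^(Suc j) < d" using not_less_Least[of j "\<lambda>n. (1/2::real)^(Suc n) < d"]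
      unfolding kk_def by simp
    then show ?thesis using Suc by simp
  qed
qed

lemma sets_singleton_Kborel: "{y} \<in> sets Kborel"
proof -
  have "{y} = (\<Inter>k. cyl k y)"
  proof
    show "(\<Inter>k. cyl k y) \<subseteq> {y}"
    proof
      fix z assume "z \<in> (\<Inter>k. cyl k y)"
      then have "\<And>i. z i = y i" by (auto simp: cyl_def)
      then show "z \<in> {y}" by auto
    qed
  qed (auto simp: cyl_def)
  also have "\<dots> \<in> sets Kborel" by (intro sets.countable_INT) auto
  finally show ?thesis .
qed

lemma mass_distribution:
  assumes m: "prob_space m" "sets m = sets Kborel"
    and E': "E' \<in> sets m" "E' \<subseteq> E" "0 < measure m E'"
    and C: "0 < C" and t: "0 < t" "t \<le> 1" and s: "0 \<le> s" "s \<le> t"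
    and bnd: "\<And>y k. y \<in> E' \<Longrightarrow> measure m (cyl k y) \<le> C * ((1/2)^k) powr t"
  shows "hausdorff_measure s E \<noteq> 0"
proof -
  interpret prob_space m by (rule m(1))
  let ?a = "measure m E'"
  have sing0: "measure m {y} = 0" if y: "y \<in> E'" for y
  proof -
    have "measure m {y} \<le> 0 + e" if e: "0 < e" for e
    proof -
      obtain k where k: "(1/2::real)^k < (e/C) powr (1/t)"
        using real_arch_pow_inv[of "(e/C) powr (1/t)" "1/2"] e C by auto
      have "((1/2::real)^k) powr t < ((e/C) powr (1/t)) powr t"
        using k t by (intro powr_less_mono2) auto
      also have "\<dots> = e/C" using e C t by (simp add: powr_powr)
      finally have "C * ((1/2::real)^k) powr t < e" using C by (simp add: field_simps)
      moreover have "measure m {y} \<le> measure m (cyl k y)"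
      proof (rule finite_measure_mono)
        show "{y} \<subseteq> cyl k y" by (simp add: cyl_def)
        show "cyl k y \<in> sets m" unfolding m(2) by (rule cyl_Kborel)
      qed
      moreover have "measure m (cyl k y) \<le> C * ((1/2)^k) powr t" by (rule bnd[OF y])
      ultimately show ?thesis by linarith
    qed
    then have "measure m {y} \<le> 0" by (rule field_le_epsilon)
    then show ?thesis using measure_nonneg[of m "{y}"] by linarith
  qed
  have key: "ennreal (?a / (2*C)) \<le> (\<Sum>i. ennreal (cdiam (U i) powr s))"
    if cov: "E \<subseteq> (\<Union>i. U i)" for U :: "nat \<Rightarrow> cantor set"
  proof -
    define y where "y i = (SOME y. y \<in> U i \<inter> E')" for i
    define V where "V i = (if U i \<inter> E' = {} then {} else if cdiam (U i) = 0 then {y i}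
        else cyl (kk (cdiam (U i))) (y i))" for i
    have yin: "y i \<in> U i \<inter> E'" if "U i \<inter> E' \<noteq> {}" for i
      unfolding y_def using someI_ex[of "\<lambda>y. y \<in> U i \<inter> E'"] that by blast
    have Vsets: "V i \<in> sets m" for i using m(2) by (auto simp: V_def sets_singleton_Kborel)
    have cover: "E' \<subseteq> (\<Union>i. V i)"
    proof
      fix x assume x: "x \<in> E'"
      then obtain i where i: "x \<in> U i" using cov E'(2) by blast
      then have ne: "U i \<inter> E' \<noteq> {}" using x by auto
      note yi = yin[OF ne]
      show "x \<in> (\<Union>i. V i)"
      proof (cases "cdiam (U i) = 0")
        case True
        then have "cdist (y i) x \<le> 0" using cdiam_upper[of "y i" "U i" x] yi i by simp
        then have "x = y i" using cdist_nonneg[of "y i" x] cdist_zero[of "y i" x] by simp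
        then show ?thesis using ne True by (auto simp: V_def)
      next
        case False
        then have d: "0 < cdiam (U i)" "cdiam (U i) \<le> 1" using cdiam_nonneg[of "U i"] cdiam_le1[of "U i"] by auto
        have "cdist (y i) x \<le> (1/2)^(kk (cdiam (U i)))"
          using cdiam_upper[of "y i" "U i" x] yi i kk_props(1)[OF d] by simp
        then have "x \<in> cyl (kk (cdiam (U i))) (y i)" using cdist_le_agree[of "y i" x]
          by (auto simp: cyl_def)
        then show ?thesis using ne False by (auto simp: V_def)
      qed
    qed
    have Vbnd: "emeasure m (V i) \<le> ennreal (2 * C) * ennreal (cdiam (U i) powr s)" for i
    proof (cases "U i \<inter> E' = {}")
      case True then show ?thesis by (simp add: V_def)
    next
      case ne: False
      note yi = yin[OF ne]
      show ?thesis
      proof (cases "cdiam (U i) = 0")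
        case True
        then have "emeasure m (V i) = 0" using ne sing0[of "y i"] yi
          by (simp add: V_def emeasure_eq_measure)
        then show ?thesis by simp
      next
        case False
        let ?d = "cdiam (U i)"
        let ?k = "kk ?d"
        have d: "0 < ?d" "?d \<le> 1" using False cdiam_nonneg[of "U i"] cdiam_le1[of "U i"] by auto
        have "(1/2::real)^?k = 2 * (1/2)^(Suc ?k)" by simp
        also have "\<dots> < 2 * ?d" using kk_props(2)[OF d] by simp
        finally have hk: "(1/2::real)^?k < 2 * ?d" .
        have "measure m (V i) = measure m (cyl ?k (y i))" using ne False by (simp add: V_def)
        also have "\<dots> \<le> C * ((1/2)^?k) powr t" using bnd yi by blast
        also have "\<dots> \<le> C * (2 * ?d) powr t" using hk C t by (intro mult_left_mono powr_mono2) auto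
        also have "\<dots> = C * (2 powr t * ?d powr t)" using d by (simp add: powr_mult)
        also have "\<dots> \<le> C * (2 * ?d powr s)"
        proof (intro mult_left_mono)
          have "2 powr t \<le> (2::real) powr 1" using t by (intro powr_mono) auto
          moreover have "?d powr t \<le> ?d powr s" using d s by (intro powr_mono') auto
          ultimately show "2 powr t * ?d powr t \<le> 2 * ?d powr s" by (intro mult_mono) auto
        qed (use C in auto)
        finally have "measure m (V i) \<le> 2 * C * ?d powr s" by simp
        then show ?thesis using C by (simp add: emeasure_eq_measure ennreal_mult[symmetric])
      qed
    qed
    have "ennreal ?a = emeasure m E'" by (simp add: emeasure_eq_measure)
    also have "\<dots> \<le> emeasure m (\<Union>i. V i)" using cover Vsets by (intro emeasure_mono) auto
    also have "\<dots> \<le> (\<Sum>i. emeasure m (V i))" using Vsets by (intro emeasure_subadditive_countably) auto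
    also have "\<dots> \<le> (\<Sum>i. ennreal (2 * C) * ennreal (cdiam (U i) powr s))"
      by (intro suminf_le Vbnd) auto
    also have "\<dots> = ennreal (2 * C) * (\<Sum>i. ennreal (cdiam (U i) powr s))" by simp
    finally have A: "ennreal ?a \<le> ennreal (2 * C) * (\<Sum>i. ennreal (cdiam (U i) powr s))" .
    have "ennreal (?a / (2*C)) = ennreal (1 / (2*C)) * ennreal ?a"
      using C by (simp add: ennreal_mult[symmetric])
    also have "\<dots> \<le> ennreal (1 / (2*C)) * (ennreal (2 * C) * (\<Sum>i. ennreal (cdiam (U i) powr s)))"
      by (intro mult_left_mono A) auto
    also have "\<dots> = (\<Sum>i. ennreal (cdiam (U i) powr s))"
      using C by (simp add: mult.assoc[symmetric] ennreal_mult[symmetric])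
    finally show ?thesis .
  qed
  have "ennreal (?a / (2*C)) \<le> hausdorff_delta s 1 E"
    unfolding hausdorff_delta_def by (rule INF_greatest) (use key in auto)
  also have "\<dots> \<le> hausdorff_measure s E"
    unfolding hausdorff_measure_def by (rule SUP_upper) auto
  finally have "ennreal (?a / (2*C)) \<le> hausdorff_measure s E" .
  moreover have "0 < ennreal (?a / (2*C))" using E'(3) C by simp
  ultimately show ?thesis by auto
qed

definition theta :: real where "theta = 1/256"

definition mlen :: "nat \<Rightarrow> nat \<Rightarrow> nat" where "mlen m0 k = m0 * (k+3)"

primrec bpos :: "nat \<Rightarrow> nat \<Rightarrow> nat" where
  "bpos m0 0 = 0"
| "bpos m0 (Suc k) = (bpos m0 k + 2 * mlen m0 k) + 32 * (4 * (bpos m0 k + 2 * mlen m0 k) + k + 3)"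

definition tend :: "nat \<Rightarrow> nat \<Rightarrow> nat" where "tend m0 k = bpos m0 k + 2 * mlen m0 k"
definition jlen :: "nat \<Rightarrow> nat \<Rightarrow> nat" where "jlen m0 k = 4 * tend m0 k + k + 3"

lemma bpos_Suc2: "bpos m0 (Suc k) = tend m0 k + 32 * jlen m0 k"
  by (simp add: tend_def jlen_def)

declare bpos.simps(2)[simp del]

lemma bpos_less: "bpos m0 k < bpos m0 (Suc k)"
  by (simp add: bpos_Suc2 jlen_def tend_def)

lemma bpos_smono: "strict_mono (bpos m0)"
  by (rule strict_monoI_Suc) (rule bpos_less)

lemma bpos_mono: "k \<le> k' \<Longrightarrow> bpos m0 k \<le> bpos m0 k'"
  using bpos_smono strict_mono_less_eq by blast

lemma bpos_ge: "k \<le> bpos m0 k"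
  using bpos_smono by (rule strict_mono_imp_increasing)

lemma tend_ge: "bpos m0 k \<le> tend m0 k" by (simp add: tend_def)
lemma tend_le: "tend m0 k \<le> bpos m0 (Suc k)" by (simp add: bpos_Suc2)
lemma jlen_ge: "k + 3 \<le> jlen m0 k" by (simp add: jlen_def)
lemma tend_jlen: "8 * tend m0 k \<le> 2 * jlen m0 k" by (simp add: jlen_def)

definition blk :: "nat \<Rightarrow> nat \<Rightarrow> nat" where "blk m0 i = (LEAST k. i < bpos m0 (Suc k))"

lemma blk_props: "bpos m0 (blk m0 i) \<le> i" "i < bpos m0 (Suc (blk m0 i))"
proof -
  have ex: "\<exists>k. i < bpos m0 (Suc k)"
    using bpos_ge[of "Suc i" m0] by (intro exI[of _ i]) simp
  show "i < bpos m0 (Suc (blk m0 i))" unfolding blk_def by (rule LeastI_ex[OF ex])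
  show "bpos m0 (blk m0 i) \<le> i"
  proof (cases "blk m0 i")
    case (Suc j)
    then have "\<not> i < bpos m0 (Suc j)" using not_less_Least[of j "\<lambda>k. i < bpos m0 (Suc k)"]
      unfolding blk_def by simp
    then show ?thesis using Suc by simp
  qed simp
qed

lemma blk_eq: assumes "bpos m0 k \<le> i" "i < bpos m0 (Suc k)" shows "blk m0 i = k"
proof (rule ccontr)
  assume ne: "blk m0 i \<noteq> k"
  show False
  proof (cases "blk m0 i < k")
    case True
    then have "bpos m0 (Suc (blk m0 i)) \<le> bpos m0 k" by (intro bpos_mono) simp
    then show False using blk_props(2)[of i m0] assms by simp
  next
    case False
    then have "bpos m0 (Suc k) \<le> bpos m0 (blk m0 i)" using ne by (intro bpos_mono) simp
    then show False using blk_props(1)[of m0 i] assms by simp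
  qed
qed

definition pass :: "nat \<Rightarrow> nat \<Rightarrow> cantor \<Rightarrow> bool" where
  "pass m0 k x = (mlen m0 k \<le> cnt True (bpos m0 k) (2 * mlen m0 k) x)"

primrec goodS :: "nat \<Rightarrow> nat \<Rightarrow> cantor \<Rightarrow> bool" where
  "goodS m0 0 x = True"
| "goodS m0 (Suc k) x = (goodS m0 k x \<and> pass m0 k x)"

definition few :: "nat \<Rightarrow> nat \<Rightarrow> cantor \<Rightarrow> bool" where
  "few m0 k x = (cnt True (tend m0 k) (32 * jlen m0 k) x < jlen m0 k)"

primrec Cset :: "nat \<Rightarrow> nat \<Rightarrow> cantor \<Rightarrow> bool" where
  "Cset m0 0 x = True"
| "Cset m0 (Suc k) x = (Cset m0 k x \<and> pass m0 k x \<and> few m0 k x)"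

definition Pf :: "real \<Rightarrow> nat \<Rightarrow> nat \<Rightarrow> cantor \<Rightarrow> real" where
  "Pf tp m0 i x = (if i < tend m0 (blk m0 i) then tp
     else if goodS m0 (Suc (blk m0 i)) x then theta else 1/2)"

lemma pass_dep: "(\<And>j. j < tend m0 k \<Longrightarrow> x j = y j) \<Longrightarrow> pass m0 k x = pass m0 k y"
  unfolding pass_def using cnt_dep[of "bpos m0 k" "2 * mlen m0 k" x y True] by (simp add: tend_def)

lemma goodS_dep: "(\<And>j. j < bpos m0 k \<Longrightarrow> x j = y j) \<Longrightarrow> goodS m0 k x = goodS m0 k y"
proof (induction k)
  case (Suc k)
  have "goodS m0 k x = goodS m0 k y" using Suc bpos_less[of m0 k] by simp
  moreover have "pass m0 k x = pass m0 k y" using Suc tend_le[of m0 k] by (intro pass_dep) simp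
  ultimately show ?case by simp
qed simp

lemma goodS_Suc_dep: "(\<And>j. j < tend m0 k \<Longrightarrow> x j = y j) \<Longrightarrow> goodS m0 (Suc k) x = goodS m0 (Suc k) y"
  using goodS_dep[of m0 k x y] pass_dep[of m0 k x y] tend_ge[of m0 k] by simp

lemma few_dep: "(\<And>j. j < bpos m0 (Suc k) \<Longrightarrow> x j = y j) \<Longrightarrow> few m0 k x = few m0 k y"
  unfolding few_def using cnt_dep[of "tend m0 k" "32 * jlen m0 k" x y True] by (simp add: bpos_Suc2 del: One_nat_def)

lemma Cset_dep: "(\<And>j. j < bpos m0 k \<Longrightarrow> x j = y j) \<Longrightarrow> Cset m0 k x = Cset m0 k y"
proof (induction k)
  case (Suc k)
  have "Cset m0 k x = Cset m0 k y" using Suc bpos_less[of m0 k] by simp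
  moreover have "pass m0 k x = pass m0 k y" using Suc tend_le[of m0 k] by (intro pass_dep) simp
  moreover have "few m0 k x = few m0 k y" using Suc by (intro few_dep) simp
  ultimately show ?case by simp
qed simp

lemma Cset_goodS: "Cset m0 k x \<Longrightarrow> goodS m0 k x"
  by (induction k) auto

lemma goodS_anti: "k \<le> k' \<Longrightarrow> goodS m0 k' x \<Longrightarrow> goodS m0 k x"
  by (induction k' rule: dec_induct) auto

lemma validP_Pf: assumes "0 < tp" "tp < 1" shows "validP (Pf tp m0)"
  unfolding validP_def
proof (intro conjI allI)
  fix i x show "0 < Pf tp m0 i x" "Pf tp m0 i x < 1" using assms by (auto simp: Pf_def theta_def)
next
  fix i show "depn i (Pf tp m0 i)"
    unfolding depn_def
  proof (intro allI impI)
    fix x y :: cantor assume a: "\<forall>j<i. x j = y j"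
    show "Pf tp m0 i x = Pf tp m0 i y"
    proof (cases "i < tend m0 (blk m0 i)")
      case False
      then have "goodS m0 (Suc (blk m0 i)) x = goodS m0 (Suc (blk m0 i)) y"
        using a by (intro goodS_Suc_dep) simp
      then show ?thesis by (simp add: Pf_def)
    qed (simp add: Pf_def)
  qed
qed

lemma Pf_test: "bpos m0 k \<le> i \<Longrightarrow> i < tend m0 k \<Longrightarrow> Pf tp m0 i x = tp"
  using blk_eq[of m0 k i] tend_le[of m0 k] by (simp add: Pf_def)

lemma Pf_ent: "tend m0 k \<le> i \<Longrightarrow> i < bpos m0 (Suc k) \<Longrightarrow>
   Pf tp m0 i x = (if goodS m0 (Suc k) x then theta else 1/2)"
  using blk_eq[of m0 k i] tend_ge[of m0 k] by (simp add: Pf_def)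

lemma cp_Pf_ge: assumes "1/4 \<le> tp" "tp \<le> 3/4" shows "theta \<le> cp (Pf tp m0) i x"
  using assms by (auto simp: cp_def Pf_def theta_def)

lemma cnt_TF: "cnt True a l x + cnt False a l x = l"
  by (induction l) (auto simp: cnt_Suc)

definition rho :: "real \<Rightarrow> real" where "rho eta = 1 - 4 * eta^2"
definition lamE :: "real \<Rightarrow> real" where "lamE eta = (1 + 2*eta) / (1 - 2*eta)"
definition Pmu :: "real \<Rightarrow> nat \<Rightarrow> nat \<Rightarrow> cantor \<Rightarrow> real" where "Pmu eta m0 = Pf (1/2 - eta) m0"
definition Pnu :: "real \<Rightarrow> nat \<Rightarrow> nat \<Rightarrow> cantor \<Rightarrow> real" where "Pnu eta m0 = Pf (1/2 + eta) m0"

lemma chern_const: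
  assumes "0 < eta" "eta \<le> 1/16"
  shows "(1 - (1/2 - eta) + (1/2 - eta) * lamE eta) ^ (2*m) / (lamE eta) ^ m = rho eta ^ m"
proof -
  have ne: "1 - 2*eta \<noteq> 0" using assms by simp
  have lpos: "0 < lamE eta" using assms by (simp add: lamE_def)
  have e1: "1 - (1/2 - eta) + (1/2 - eta) * lamE eta = 1 + 2*eta"
    using ne by (simp add: lamE_def field_simps)
  have e2: "lamE eta * rho eta = (1 + 2*eta)^2"
    using ne by (simp add: lamE_def rho_def field_simps power2_eq_square)
  have "(1 + 2*eta)^(2*m) = (lamE eta * rho eta)^m" by (simp add: e2 power_mult)
  also have "\<dots> = lamE eta ^ m * rho eta ^ m" by (simp add: power_mult_distrib)
  finally show ?thesis using lpos unfolding e1 by simp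
qed

lemma lamE_ge1: "0 < eta \<Longrightarrow> eta \<le> 1/16 \<Longrightarrow> 1 \<le> lamE eta"
  by (simp add: lamE_def field_simps)

lemma rho_pos: "0 < eta \<Longrightarrow> eta \<le> 1/16 \<Longrightarrow> 0 < rho eta"
proof -
  assume "0 < eta" "eta \<le> 1/16"
  then have "eta^2 \<le> (1/16)^2" by (intro power_mono) auto
  then have "eta^2 \<le> 1/256" by (simp add: power2_eq_square)
  then show ?thesis unfolding rho_def by linarith
qed

lemma validP_mu: "0 < eta \<Longrightarrow> eta \<le> 1/16 \<Longrightarrow> validP (Pmu eta m0)"
  unfolding Pmu_def by (rule validP_Pf) auto

lemma validP_nu: "0 < eta \<Longrightarrow> eta \<le> 1/16 \<Longrightarrow> validP (Pnu eta m0)"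
  unfolding Pnu_def by (rule validP_Pf) auto

lemma Exw_le1: "validP P \<Longrightarrow> (\<And>x. f x \<le> 1) \<Longrightarrow> Exw P n f \<le> 1"
  using Exw_mono[of P f "\<lambda>_. 1" n] Exw_one[of P n] by simp

lemma rho_mlen:
  assumes "0 < eta" "eta \<le> 1/16" "rho eta ^ m0 \<le> 1/2"
  shows "rho eta ^ mlen m0 k \<le> (1/2)^(k+3)"
proof -
  have "rho eta ^ mlen m0 k = (rho eta ^ m0) ^ (k+3)" by (simp add: mlen_def power_mult)
  also have "\<dots> \<le> (1/2)^(k+3)" using assms rho_pos[of eta] by (intro power_mono) auto
  finally show ?thesis .
qed

lemma depn_goodS: "depn (bpos m0 k) (indicator {x. goodS m0 k x} :: cantor \<Rightarrow> real)"
  unfolding depn_def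
proof (intro allI impI)
  fix x y :: cantor assume "\<forall>i<bpos m0 k. x i = y i"
  then have "goodS m0 k x = goodS m0 k y" by (intro goodS_dep) auto
  then show "indicator {x. goodS m0 k x} x = (indicator {x. goodS m0 k x} y :: real)" by (simp add: indicator_def)
qed

lemma depn_goodS_Suc: "depn (tend m0 k) (indicator {x. goodS m0 (Suc k) x} :: cantor \<Rightarrow> real)"
  unfolding depn_def
proof (intro allI impI)
  fix x y :: cantor assume "\<forall>i<tend m0 k. x i = y i"
  then have "goodS m0 (Suc k) x = goodS m0 (Suc k) y" by (intro goodS_Suc_dep) auto
  then show "indicator {x. goodS m0 (Suc k) x} x = (indicator {x. goodS m0 (Suc k) x} y :: real)"
    by (simp only: indicator_def mem_Collect_eq)
qed

lemma depn_Cset: "depn (bpos m0 k) (indicator {x. Cset m0 k x} :: cantor \<Rightarrow> real)"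
  unfolding depn_def
proof (intro allI impI)
  fix x y :: cantor assume "\<forall>i<bpos m0 k. x i = y i"
  then have "Cset m0 k x = Cset m0 k y" by (intro Cset_dep) auto
  then show "indicator {x. Cset m0 k x} x = (indicator {x. Cset m0 k x} y :: real)" by (simp add: indicator_def)
qed

lemma mu_goodS_Exw:
  assumes e: "0 < eta" "eta \<le> 1/16" "rho eta ^ m0 \<le> 1/2"
  shows "Exw (Pmu eta m0) (bpos m0 k) (indicator {x. goodS m0 k x}) \<le> (1/2)^k"
proof (induction k)
  case 0
  show ?case using Exw_le1[OF validP_mu[OF e(1,2)]] by (simp add: indicator_def)
next
  case (Suc k)
  let ?P = "Pmu eta m0"
  let ?g = "indicator {x. goodS m0 k x} :: cantor \<Rightarrow> real"
  have V: "validP ?P" by (rule validP_mu[OF e(1,2)])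
  have "Exw ?P (bpos m0 (Suc k)) (indicator {x. goodS m0 (Suc k) x}) =
        Exw ?P (tend m0 k) (indicator {x. goodS m0 (Suc k) x})"
    by (rule Exw_depn[OF V depn_goodS_Suc tend_le])
  also have "\<dots> = Exw ?P (bpos m0 k + 2 * mlen m0 k)
      (\<lambda>x. if mlen m0 k \<le> cnt True (bpos m0 k) (2 * mlen m0 k) x then ?g x else 0)"
    unfolding tend_def
    by (intro arg_cong[where f="Exw ?P (bpos m0 k + 2 * mlen m0 k)"] ext) (simp add: pass_def indicator_def)
  also have "\<dots> \<le> (1 - (1/2 - eta) + (1/2 - eta) * lamE eta) ^ (2 * mlen m0 k) / lamE eta ^ mlen m0 k
        * Exw ?P (bpos m0 k) ?g"
  proof (rule chernoff[OF V depn_goodS])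
    show "\<And>x. 0 \<le> ?g x" by (simp add: indicator_def)
    show "1 \<le> lamE eta" using lamE_ge1 e by simp
    fix i x assume "bpos m0 k \<le> i" "i < bpos m0 k + 2 * mlen m0 k"
    then show "?P i x = (if True then 1/2 - eta else 1 - (1/2 - eta))"
      unfolding Pmu_def using Pf_test[of m0 k i "1/2 - eta" x] \<open>i < bpos m0 k + 2 * mlen m0 k\<close> \<open>bpos m0 k \<le> i\<close>
      by (simp add: tend_def)
  qed
  also have "\<dots> = rho eta ^ mlen m0 k * Exw ?P (bpos m0 k) ?g"
    using chern_const[OF e(1,2), of "mlen m0 k"] by (simp only:)
  also have "\<dots> \<le> (1/2) * (1/2)^k"
  proof (rule mult_mono)
    show "rho eta ^ mlen m0 k \<le> 1/2"
    proof -
      have "(1/2::real)^(k+3) \<le> 1/2" using power_decreasing[of 1 "k+3" "1/2::real"] by simp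
      then show ?thesis using rho_mlen[OF e, of k] by linarith
    qed
    show "Exw ?P (bpos m0 k) ?g \<le> (1/2)^k" by (rule Suc)
    show "0 \<le> Exw ?P (bpos m0 k) ?g" by (rule Exw_nonneg[OF V]) (simp add: indicator_def)
  qed simp
  also have "(1/2::real) * (1/2)^k = (1/2)^Suc k" by simp
  finally show ?case .
qed


lemma depn_A1: "depn (tend m0 k) (\<lambda>x. if mlen m0 k \<le> cnt False (bpos m0 k) (2 * mlen m0 k) x
      then (indicator {x. Cset m0 k x} x :: real) else 0)"
  unfolding depn_def
proof (intro allI impI)
  fix x y :: cantor assume a: "\<forall>i<tend m0 k. x i = y i"
  have "Cset m0 k x = Cset m0 k y" using a tend_ge[of m0 k] by (intro Cset_dep) auto
  moreover have "cnt False (bpos m0 k) (2 * mlen m0 k) x = cnt False (bpos m0 k) (2 * mlen m0 k) y"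
    using a by (intro cnt_dep) (auto simp: tend_def)
  ultimately show "(if mlen m0 k \<le> cnt False (bpos m0 k) (2 * mlen m0 k) x then (indicator {x. Cset m0 k x} x :: real) else 0) =
      (if mlen m0 k \<le> cnt False (bpos m0 k) (2 * mlen m0 k) y then indicator {x. Cset m0 k x} y else 0)"
    by (simp add: indicator_def)
qed

lemma depn_c2: "depn (tend m0 k) (indicator {x. Cset m0 k x \<and> pass m0 k x} :: cantor \<Rightarrow> real)"
  unfolding depn_def
proof (intro allI impI)
  fix x y :: cantor assume a: "\<forall>i<tend m0 k. x i = y i"
  have "Cset m0 k x = Cset m0 k y" using a tend_ge[of m0 k] by (intro Cset_dep) auto
  moreover have "pass m0 k x = pass m0 k y" using a by (intro pass_dep) auto
  ultimately show "indicator {x. Cset m0 k x \<and> pass m0 k x} x = (indicator {x. Cset m0 k x \<and> pass m0 k x} y :: real)"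
    by (simp add: indicator_def)
qed

lemma num1: "(259/256::real)^32 \<le> 2" by (simp add: power_divide)
lemma num2: "(1/2::real) \<le> (255/256)^32" by (simp add: power_divide)

lemma nu_Cset_Exw:
  assumes e: "0 < eta" "eta \<le> 1/16" "rho eta ^ m0 \<le> 1/2"
  shows "1/2 + (1/2)^(k+1) \<le> Exw (Pnu eta m0) (bpos m0 k) (indicator {x. Cset m0 k x})"
proof (induction k)
  case 0
  have "indicator {x. Cset m0 0 x} = (\<lambda>_. 1::real)" by (simp add: indicator_def)
  then show ?case using Exw_one[OF validP_nu[OF e(1,2)]] by simp
next
  case (Suc k)
  let ?P = "Pnu eta m0"
  let ?N = "bpos m0 (Suc k)"
  let ?c = "indicator {x. Cset m0 k x} :: cantor \<Rightarrow> real"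
  let ?c' = "indicator {x. Cset m0 (Suc k) x} :: cantor \<Rightarrow> real"
  let ?c2 = "indicator {x. Cset m0 k x \<and> pass m0 k x} :: cantor \<Rightarrow> real"
  let ?A1 = "\<lambda>x. if mlen m0 k \<le> cnt False (bpos m0 k) (2 * mlen m0 k) x then ?c x else 0"
  let ?A2 = "\<lambda>x. if jlen m0 k \<le> cnt True (tend m0 k) (32 * jlen m0 k) x then ?c2 x else 0"
  have V: "validP ?P" by (rule validP_nu[OF e(1,2)])
  have pw: "?c x \<le> ?c' x + ?A1 x + ?A2 x" for x
  proof (cases "Cset m0 k x")
    case C: True
    show ?thesis
    proof (cases "pass m0 k x")
      case False
      then have "cnt True (bpos m0 k) (2 * mlen m0 k) x < mlen m0 k" by (simp add: pass_def)
      then have "mlen m0 k \<le> cnt False (bpos m0 k) (2 * mlen m0 k) x"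
        using cnt_TF[of "bpos m0 k" "2 * mlen m0 k" x] by linarith
      then show ?thesis using C by (simp add: indicator_def)
    next
      case p: True
      show ?thesis
      proof (cases "few m0 k x")
        case True then show ?thesis using C p by (simp add: indicator_def)
      next
        case False
        then have "jlen m0 k \<le> cnt True (tend m0 k) (32 * jlen m0 k) x" by (simp add: few_def)
        then show ?thesis using C p by (simp add: indicator_def)
      qed
    qed
  qed (simp add: indicator_def)
  have e1: "Exw ?P ?N ?c = Exw ?P (bpos m0 k) ?c"
    by (rule Exw_depn[OF V depn_Cset]) (simp add: bpos_mono)
  have e2: "Exw ?P ?N ?A1 = Exw ?P (tend m0 k) ?A1"
    by (rule Exw_depn[OF V depn_A1 tend_le])
  have c1: "Exw ?P (bpos m0 k) ?c \<le> 1" by (rule Exw_le1[OF V]) (simp add: indicator_def)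
  have c2: "Exw ?P (tend m0 k) ?c2 \<le> 1" by (rule Exw_le1[OF V]) (simp add: indicator_def)
  have c0: "0 \<le> Exw ?P (bpos m0 k) ?c" by (rule Exw_nonneg[OF V]) (simp add: indicator_def)
  have c20: "0 \<le> Exw ?P (tend m0 k) ?c2" by (rule Exw_nonneg[OF V]) (simp add: indicator_def)
  have hA1: "Exw ?P (tend m0 k) ?A1 \<le> (1/2)^(k+3)"
  proof -
    have "Exw ?P (bpos m0 k + 2 * mlen m0 k) ?A1 \<le>
      (1 - (1/2 - eta) + (1/2 - eta) * lamE eta) ^ (2 * mlen m0 k) / lamE eta ^ mlen m0 k * Exw ?P (bpos m0 k) ?c"
    proof (rule chernoff[OF V depn_Cset])
      show "\<And>x. 0 \<le> ?c x" by (simp add: indicator_def)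
      show "1 \<le> lamE eta" using lamE_ge1 e by simp
      fix i x assume i: "bpos m0 k \<le> i" "i < bpos m0 k + 2 * mlen m0 k"
      show "?P i x = (if False then 1/2 - eta else 1 - (1/2 - eta))"
        unfolding Pnu_def using Pf_test[of m0 k i "1/2 + eta" x] i by (simp add: tend_def)
    qed
    also have "\<dots> = rho eta ^ mlen m0 k * Exw ?P (bpos m0 k) ?c"
      using chern_const[OF e(1,2), of "mlen m0 k"] by (simp only:)
    also have "\<dots> \<le> (1/2)^(k+3) * 1"
      using rho_mlen[OF e, of k] c1 c0 rho_pos[OF e(1,2)] by (intro mult_mono) auto
    finally show ?thesis by (simp add: tend_def)
  qed
  have hA2: "Exw ?P ?N ?A2 \<le> (1/2)^(k+3)"
  proof -
    have "Exw ?P (tend m0 k + 32 * jlen m0 k) ?A2 \<le>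
      (1 - theta + theta * 4) ^ (32 * jlen m0 k) / 4 ^ jlen m0 k * Exw ?P (tend m0 k) ?c2"
    proof (rule chernoff[OF V depn_c2])
      show "\<And>x. 0 \<le> ?c2 x" by (simp add: indicator_def)
      fix i x assume i: "tend m0 k \<le> i" "i < tend m0 k + 32 * jlen m0 k" and nz: "?c2 x \<noteq> 0"
      then have "Cset m0 k x" "pass m0 k x" by (auto simp: indicator_def split: if_splits)
      then have "goodS m0 (Suc k) x" using Cset_goodS by auto
      then show "?P i x = (if True then theta else 1 - theta)"
        unfolding Pnu_def using Pf_ent[of m0 k i "1/2 + eta" x] i by (simp add: bpos_Suc2)
    qed simp
    also have "(1 - theta + theta * 4) ^ (32 * jlen m0 k) / 4 ^ jlen m0 k = ((259/256)^32 / 4) ^ jlen m0 k"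
    proof -
      have "1 - theta + theta * 4 = (259/256::real)" by (simp add: theta_def)
      then show ?thesis by (simp only: power_mult power_divide)
    qed
    also have "((259/256::real)^32 / 4) ^ jlen m0 k * Exw ?P (tend m0 k) ?c2 \<le> (1/2) ^ jlen m0 k * 1"
    proof (rule mult_mono)
      show "((259/256::real)^32 / 4) ^ jlen m0 k \<le> (1/2) ^ jlen m0 k"
        using num1 by (intro power_mono) auto
    qed (use c2 c20 in auto)
    also have "(1/2::real) ^ jlen m0 k * 1 \<le> (1/2)^(k+3)"
      using jlen_ge[of k m0] by (simp add: power_decreasing)
    finally show ?thesis by (simp add: bpos_Suc2)
  qed
  have "Exw ?P ?N ?c \<le> Exw ?P ?N (\<lambda>x. ?c' x + ?A1 x + ?A2 x)"
    by (rule Exw_mono[OF V pw])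
  also have "\<dots> = Exw ?P ?N ?c' + Exw ?P ?N ?A1 + Exw ?P ?N ?A2" by (simp add: Exw_add)
  finally have "Exw ?P (bpos m0 k) ?c \<le> Exw ?P ?N ?c' + (1/2)^(k+3) + (1/2)^(k+3)"
    using e1 e2 hA1 hA2 by linarith
  then have "1/2 + (1/2)^(k+1) \<le> Exw ?P ?N ?c' + 2 * (1/2)^(k+3)" using Suc by linarith
  moreover have "(1/2::real)^(k+1) = 2 * (1/2)^(k+3) + (1/2)^(Suc k + 1)"
  proof -
    have "(1/2::real)^(k+3) = (1/2)^k/8" "(1/2::real)^(Suc k+1) = (1/2)^k/4" "(1/2::real)^(k+1) = (1/2)^k/2"
      by (simp_all add: power_add power_divide)
    then show ?thesis by linarith
  qed
  ultimately show ?case by linarith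
qed

lemma W_ge_theta: "1/4 \<le> tp \<Longrightarrow> tp \<le> 3/4 \<Longrightarrow> theta ^ n \<le> W (Pf tp m0) n x"
proof (induction n)
  case (Suc n)
  have "theta ^ Suc n = theta ^ n * theta" by simp
  also have "\<dots> \<le> W (Pf tp m0) n x * cp (Pf tp m0) n x"
    using Suc cp_Pf_ge[of tp m0 n x] W_pos[OF validP_Pf[of tp m0], of n x]
    by (intro mult_mono) (auto simp: theta_def)
  finally show ?case by (simp add: W_Suc)
qed simp

lemma W_block:
  assumes V: "validP P" and th: "\<And>i. a \<le> i \<Longrightarrow> i < a + l \<Longrightarrow> P i x = theta"
  shows "W P a x * theta ^ cnt True a l x * (1 - theta) ^ l \<le> W P (a + l) x"
  using th
proof (induction l)
  case (Suc l)
  have IH: "W P a x * theta ^ cnt True a l x * (1 - theta) ^ l \<le> W P (a + l) x"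
    using Suc by simp
  have Pv: "P (a+l) x = theta" using Suc(2) by simp
  have Wa: "0 \<le> W P a x" using W_pos[OF V] less_imp_le by blast
  show ?case
  proof (cases "x (a+l)")
    case True
    have "W P a x * theta ^ cnt True a (Suc l) x * (1 - theta) ^ Suc l
        = (W P a x * theta ^ cnt True a l x * (1 - theta) ^ l) * (theta * (1 - theta))"
      using True by (simp add: cnt_Suc)
    also have "\<dots> \<le> W P (a + l) x * theta"
      using IH Wa W_pos[OF V, of "a+l" x] by (intro mult_mono) (auto simp: theta_def)
    also have "\<dots> = W P (a + Suc l) x" using True Pv by (simp add: W_Suc cp_def)
    finally show ?thesis .
  next
    case False
    have "W P a x * theta ^ cnt True a (Suc l) x * (1 - theta) ^ Suc l
        = (W P a x * theta ^ cnt True a l x * (1 - theta) ^ l) * (1 - theta)"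
      using False by (simp add: cnt_Suc)
    also have "\<dots> \<le> W P (a + l) x * (1 - theta)"
      using IH by (intro mult_right_mono) (auto simp: theta_def)
    also have "\<dots> = W P (a + Suc l) x" using False Pv by (simp add: W_Suc cp_def)
    finally show ?thesis .
  qed
qed simp

lemma heavy:
  assumes e: "0 < eta" "eta \<le> 1/16" and C: "Cset m0 (Suc k) x"
  shows "(1/2)^(11 * jlen m0 k) \<le> W (Pnu eta m0) (bpos m0 (Suc k)) x"
proof -
  let ?P = "Pnu eta m0"
  let ?t = "tend m0 k"
  let ?j = "jlen m0 k"
  have V: "validP ?P" by (rule validP_nu[OF e])
  have g: "goodS m0 (Suc k) x" using C Cset_goodS by blast
  have fw: "cnt True ?t (32 * ?j) x < ?j" using C by (simp add: few_def)
  have th: "?P i x = theta" if "?t \<le> i" "i < ?t + 32 * ?j" for i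
    unfolding Pnu_def using Pf_ent[of m0 k i "1/2 + eta" x] that g by (simp add: bpos_Suc2)
  have t1: "(1/2)^(2 * ?j) \<le> theta ^ ?t"
  proof -
    have "(1/2::real)^(2 * ?j) \<le> (1/2)^(8 * ?t)" using tend_jlen[of m0 k] by (intro power_decreasing) auto
    also have "\<dots> = theta ^ ?t" by (simp add: theta_def power_mult power_divide)
    finally show ?thesis .
  qed
  have t2: "(1/2)^(8 * ?j) \<le> theta ^ cnt True ?t (32 * ?j) x"
  proof -
    have "(1/2::real)^(8 * ?j) = theta ^ ?j" by (simp add: theta_def power_mult power_divide)
    also have "\<dots> \<le> theta ^ cnt True ?t (32 * ?j) x" using fw by (intro power_decreasing) (auto simp: theta_def)
    finally show ?thesis .
  qed
  have t3: "(1/2)^?j \<le> (1 - theta) ^ (32 * ?j)"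
  proof -
    have "(1/2::real)^?j \<le> ((255/256)^32)^?j" using num2 by (intro power_mono) auto
    also have "\<dots> = (1 - theta) ^ (32 * ?j)" by (simp add: theta_def power_mult power_divide)
    finally show ?thesis .
  qed
  have "(1/2::real)^(11 * ?j) = (1/2)^(2 * ?j) * (1/2)^(8 * ?j) * (1/2)^?j"
    by (simp add: power_add[symmetric])
  also have "\<dots> \<le> theta ^ ?t * theta ^ cnt True ?t (32 * ?j) x * (1 - theta) ^ (32 * ?j)"
    using t1 t2 t3 by (intro mult_mono) (auto simp: theta_def)
  also have "\<dots> \<le> W ?P ?t x * theta ^ cnt True ?t (32 * ?j) x * (1 - theta) ^ (32 * ?j)"
    using W_ge_theta[of "1/2 + eta" ?t m0 x] e unfolding Pnu_def
    by (intro mult_right_mono) (auto simp: theta_def)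
  also have "\<dots> \<le> W ?P (?t + 32 * ?j) x" by (rule W_block[OF V th])
  finally show ?thesis by (simp add: bpos_Suc2)
qed

lemma mu_cp_small:
  assumes e: "0 < eta" "eta \<le> 1/16" and ng: "\<not> goodS m0 K y" and i: "bpos m0 K \<le> i"
  shows "cp (Pmu eta m0) i y \<le> 9/16"
proof -
  let ?k = "blk m0 i"
  have b: "bpos m0 ?k \<le> i" "i < bpos m0 (Suc ?k)" by (rule blk_props)+
  have "K \<le> ?k"
  proof (rule ccontr)
    assume "\<not> K \<le> ?k"
    then have "bpos m0 (Suc ?k) \<le> bpos m0 K" by (intro bpos_mono) simp
    then show False using b i by simp
  qed
  then have ng': "\<not> goodS m0 (Suc ?k) y" using ng goodS_anti[of K "Suc ?k" m0 y] by auto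
  show ?thesis
  proof (cases "i < tend m0 ?k")
    case True
    then have "Pmu eta m0 i y = 1/2 - eta" by (simp add: Pmu_def Pf_def)
    then show ?thesis using e by (simp add: cp_def)
  next
    case False
    then have "Pmu eta m0 i y = 1/2" using ng' by (auto simp: Pmu_def Pf_def)
    then show ?thesis by (simp add: cp_def)
  qed
qed

lemma mu_W_bound:
  assumes e: "0 < eta" "eta \<le> 1/16" and ng: "\<not> goodS m0 K y"
  shows "W (Pmu eta m0) n y \<le> (9/16)^(n - bpos m0 K)"
proof (induction n)
  case (Suc n)
  have V: "validP (Pmu eta m0)" by (rule validP_mu[OF e])
  have W0: "0 \<le> W (Pmu eta m0) n y" using W_pos[OF V] less_imp_le by blast
  show ?case
  proof (cases "bpos m0 K \<le> n")
    case True
    have "W (Pmu eta m0) (Suc n) y = W (Pmu eta m0) n y * cp (Pmu eta m0) n y" by (simp add: W_Suc)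
    also have "\<dots> \<le> (9/16)^(n - bpos m0 K) * (9/16)"
      using Suc mu_cp_small[OF e ng True] W0 cp_pos[OF V, of n y] by (intro mult_mono) auto
    also have "\<dots> = (9/16)^(Suc n - bpos m0 K)" using True by (simp add: Suc_diff_le)
    finally show ?thesis .
  next
    case False
    have cp1: "cp (Pmu eta m0) n y \<le> 1" using V by (auto simp: cp_def validP_def less_imp_le)
    have "W (Pmu eta m0) (Suc n) y = W (Pmu eta m0) n y * cp (Pmu eta m0) n y" by (simp add: W_Suc)
    also have "\<dots> \<le> (9/16)^(n - bpos m0 K) * 1"
      using Suc cp1 W0 cp_pos[OF V, of n y] by (intro mult_mono) auto
    also have "\<dots> = (9/16)^(Suc n - bpos m0 K)" using False by simp
    finally show ?thesis .
  qed
qed simp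

lemma pow916: "(9/16::real)^(n - B) \<le> (16/9)^B * (9/16)^n"
proof -
  have "(9/16::real)^(n - B) * (9/16)^B = (9/16)^(n - B + B)" by (simp add: power_add)
  also have "\<dots> \<le> (9/16)^n" by (intro power_decreasing) auto
  finally have "(9/16::real)^(n - B) * (9/16)^B \<le> (9/16)^n" .
  then have "(9/16::real)^(n - B) \<le> (9/16)^n / (9/16)^B" by (simp add: field_simps)
  also have "\<dots> = (16/9)^B * (9/16)^n" by (simp add: field_simps power_divide)
  finally show ?thesis .
qed

lemma pow_916: "(9/16::real)^k \<le> ((1/2)^k) powr (4/5)"
proof -
  have l: "ln (9/16::real) \<le> 4/5 * ln (1/2)"
  proof -
    have "ln ((9/16::real)^5) \<le> ln ((1/2)^4)" by (subst ln_le_cancel_iff) (simp_all add: power_divide)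
    then have "5 * ln (9/16::real) \<le> 4 * ln (1/2)" by (simp add: ln_realpow)
    then show ?thesis by simp
  qed
  have a: "9/16 \<le> (1/2::real) powr (4/5)"
  proof -
    have "(9/16::real) = exp (ln (9/16))" by simp
    also have "\<dots> \<le> exp (4/5 * ln (1/2))" using l by (simp only: exp_le_cancel_iff)
    also have "\<dots> = (1/2::real) powr (4/5)" by (simp add: powr_def)
    finally show ?thesis .
  qed
  have "((1/2::real)^k) powr (4/5) = ((1/2) powr (real k)) powr (4/5)" by (simp add: powr_realpow)
  also have "\<dots> = (1/2) powr (real k * (4/5))" by (simp add: powr_powr)
  also have "\<dots> = ((1/2) powr (4/5))^k" by (simp add: powr_power)
  finally have e: "((1/2::real)^k) powr (4/5) = ((1/2) powr (4/5))^k" .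
  show ?thesis unfolding e using a by (intro power_mono) auto
qed

lemma doubling_Pf:
  assumes "1/4 \<le> tp" "tp \<le> 3/4"
  shows "doubling (mkm (Pf tp m0))"
  unfolding doubling_def
proof (intro exI[of _ 256] conjI allI impI)
  have V: "validP (Pf tp m0)" using assms by (intro validP_Pf) auto
  fix n :: nat and x assume n: "1 \<le> n"
  then obtain n' where n': "n = Suc n'" by (cases n) auto
  have "W (Pf tp m0) n' x * theta \<le> W (Pf tp m0) n' x * cp (Pf tp m0) n' x"
    using cp_Pf_ge[OF assms] W_pos[OF V, of n' x] by (intro mult_left_mono) auto
  then have "W (Pf tp m0) n' x \<le> 256 * W (Pf tp m0) (Suc n') x" by (simp add: W_Suc theta_def)
  then show "measure (mkm (Pf tp m0)) (cyl (n - 1) x) \<le> 256 * measure (mkm (Pf tp m0)) (cyl n x)"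
    using n' by (simp add: mkm_cyl[OF V])
qed simp

lemma ratio_cp:
  assumes "validP P" "1 \<le> n"
  shows "measure (mkm P) (cyl n x) / measure (mkm P) (cyl (n-1) x) = cp P (n-1) x"
proof -
  obtain n' where n': "n = Suc n'" using assms(2) by (cases n) auto
  show ?thesis using W_pos[OF assms(1), of n' x] n' by (simp add: mkm_cyl[OF assms(1)] W_Suc)
qed

lemma cp_mu_nu:
  assumes e: "0 < eta" "eta \<le> 1/16"
  shows "\<bar>ln (cp (Pmu eta m0) i x) - ln (cp (Pnu eta m0) i x)\<bar> \<le> ln ((1/2 + eta) / (1/2 - eta))"
proof -
  have lq: "ln ((1/2 + eta) / (1/2 - eta)) = ln (1/2 + eta) - ln (1/2 - eta)"
    using e by (subst ln_div) auto
  have lm: "ln (1/2 - eta) \<le> ln (1/2 + eta)" using e by simp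
  show ?thesis
  proof (cases "i < tend m0 (blk m0 i)")
    case True
    then have "Pmu eta m0 i x = 1/2 - eta" "Pnu eta m0 i x = 1/2 + eta"
      by (simp_all add: Pmu_def Pnu_def Pf_def)
    then show ?thesis using lq lm by (cases "x i") (auto simp: cp_def)
  next
    case False
    then have "Pmu eta m0 i x = Pnu eta m0 i x" by (simp add: Pmu_def Pnu_def Pf_def)
    then show ?thesis using lq lm by (simp add: cp_def)
  qed
qed

lemma delta_small:
  fixes eta :: real
  assumes "0 < eta" "eta \<le> 1/16"
  shows "ln ((1/2 + eta) / (1/2 - eta)) \<le> 5 * eta"
proof -
  have "ln ((1/2 + eta) / (1/2 - eta)) \<le> (1/2 + eta) / (1/2 - eta) - 1"
    using assms by (intro ln_le_minus_one) auto
  also have "\<dots> = 2 * eta / (1/2 - eta)" using assms by (simp add: field_simps)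
  also have "\<dots> \<le> 5 * eta" using assms by (simp add: field_simps)
  finally show ?thesis .
qed

lemma goodS_set_depn: "depn (bpos m0 K) (\<lambda>x. x \<in> {x. goodS m0 K x})"
  unfolding depn_def
proof (intro allI impI)
  fix x y :: cantor assume "\<forall>i<bpos m0 K. x i = y i"
  then have "goodS m0 K x = goodS m0 K y" by (intro goodS_dep) auto
  then show "(x \<in> {x. goodS m0 K x}) = (y \<in> {x. goodS m0 K x})" by simp
qed

lemma Cset_set_depn: "depn (bpos m0 K) (\<lambda>x. x \<in> {x. Cset m0 K x})"
  unfolding depn_def
proof (intro allI impI)
  fix x y :: cantor assume "\<forall>i<bpos m0 K. x i = y i"
  then have "Cset m0 K x = Cset m0 K y" by (intro Cset_dep) auto
  then show "(x \<in> {x. Cset m0 K x}) = (y \<in> {x. Cset m0 K x})" by simp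
qed

lemma lower_dim_mu:
  assumes e: "0 < eta" "eta \<le> 1/16" "rho eta ^ m0 \<le> 1/2"
  shows "4/5 \<le> lower_dim (mkm (Pmu eta m0))"
proof -
  let ?m = "mkm (Pmu eta m0)"
  have V: "validP (Pmu eta m0)" by (rule validP_mu[OF e(1,2)])
  interpret prob_space ?m by (rule mkm_prob[OF V])
  have G: "measure ?m {x. goodS m0 K x} \<le> (1/2)^K" for K
    using mkm_depn[OF V goodS_set_depn] mu_goodS_Exw[OF e, of K] by simp
  have Gs: "{x. goodS m0 K x} \<in> sets ?m" for K
    unfolding sets_mkm by (rule depn_Kborel[OF goodS_set_depn])
  have dimE: "4/5 \<le> hausdorff_dim E" if E: "E \<in> sets ?m" "0 < emeasure ?m E" for E
  proof (rule hdim_ge)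
    fix s :: real assume s: "0 \<le> s" "s < 4/5"
    have mE: "0 < measure ?m E" using E by (simp add: emeasure_eq_measure)
    obtain K where K: "(1/2::real)^K < measure ?m E" using real_arch_pow_inv[OF mE, of "1/2"] by auto
    let ?E' = "E - {x. goodS m0 K x}"
    have E's: "?E' \<in> sets ?m" using E(1) Gs[of K] by auto
    have "E \<subseteq> ?E' \<union> {x. goodS m0 K x}" by auto
    have "measure ?m E \<le> measure ?m (?E' \<union> {x. goodS m0 K x})"
    proof (rule finite_measure_mono)
      show "?E' \<union> {x. goodS m0 K x} \<in> sets ?m" using E's Gs[of K] by (rule sets.Un)
    qed auto
    also have "\<dots> \<le> measure ?m ?E' + measure ?m {x. goodS m0 K x}"
      using E's Gs[of K] by (rule measure_Un_le)
    finally have pos: "0 < measure ?m ?E'" using G[of K] K by linarith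
    show "hausdorff_measure s E \<noteq> 0"
    proof (rule mass_distribution[OF mkm_prob[OF V] sets_mkm E's _ pos])
      show "?E' \<subseteq> E" by auto
      show "0 < (16/9::real)^(bpos m0 K)" by simp
      show "(0::real) < 4/5" "(4/5::real) \<le> 1" "0 \<le> s" "s \<le> 4/5" using s by auto
      fix y k assume y: "y \<in> ?E'"
      then have ng: "\<not> goodS m0 K y" by auto
      have "measure ?m (cyl k y) = W (Pmu eta m0) k y" by (rule mkm_cyl[OF V])
      also have "\<dots> \<le> (9/16)^(k - bpos m0 K)" by (rule mu_W_bound[OF e(1,2) ng])
      also have "\<dots> \<le> (16/9)^(bpos m0 K) * (9/16)^k" by (rule pow916)
      also have "\<dots> \<le> (16/9)^(bpos m0 K) * ((1/2)^k) powr (4/5)"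
        by (intro mult_left_mono pow_916) auto
      finally show "measure ?m (cyl k y) \<le> (16/9)^(bpos m0 K) * ((1/2)^k) powr (4/5)" .
    qed
  qed
  have sp: "space ?m = UNIV" by (simp add: mkm_def)
  have ne: "{hausdorff_dim E | E. E \<in> sets ?m \<and> 0 < emeasure ?m E} \<noteq> {}"
  proof -
    have "UNIV \<in> sets ?m" using sets.top[of Kborel] by (simp add: sets_mkm)
    moreover have "0 < emeasure ?m UNIV" using emeasure_space_1 sp by simp
    ultimately show ?thesis by blast
  qed
  show ?thesis unfolding lower_dim_def
  proof (rule cInf_greatest[OF ne])
    fix d assume "d \<in> {hausdorff_dim E | E. E \<in> sets ?m \<and> 0 < emeasure ?m E}"
    then obtain E where "d = hausdorff_dim E" "E \<in> sets ?m" "0 < emeasure ?m E" by blast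
    then show "4/5 \<le> d" using dimE by simp
  qed
qed


lemma nu_F0:
  assumes e: "0 < eta" "eta \<le> 1/16" "rho eta ^ m0 \<le> 1/2"
  shows "{x. \<forall>k. Cset m0 k x} \<in> sets (mkm (Pnu eta m0))"
    "1/2 \<le> measure (mkm (Pnu eta m0)) {x. \<forall>k. Cset m0 k x}"
proof -
  let ?m = "mkm (Pnu eta m0)"
  let ?A = "\<lambda>k. {x. Cset m0 k x}"
  have V: "validP (Pnu eta m0)" by (rule validP_nu[OF e(1,2)])
  interpret prob_space ?m by (rule mkm_prob[OF V])
  have As: "?A k \<in> sets ?m" for k unfolding sets_mkm by (rule depn_Kborel[OF Cset_set_depn])
  have eq: "{x. \<forall>k. Cset m0 k x} = (\<Inter>k. ?A k)" by auto
  show "{x. \<forall>k. Cset m0 k x} \<in> sets ?m" unfolding eq using As by (intro sets.countable_INT) auto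
  have dec: "decseq ?A" by (rule decseq_SucI) auto
  have lim: "(\<lambda>k. measure ?m (?A k)) \<longlonglongrightarrow> measure ?m (\<Inter>k. ?A k)"
    by (rule finite_Lim_measure_decseq) (use As dec in auto)
  have "1/2 \<le> measure ?m (?A k)" for k
  proof -
    have "measure ?m (?A k) = Exw (Pnu eta m0) (bpos m0 k) (indicator (?A k))"
      by (rule mkm_depn[OF V Cset_set_depn])
    moreover have "1/2 + (1/2)^(k+1) \<le> Exw (Pnu eta m0) (bpos m0 k) (indicator (?A k))"
      by (rule nu_Cset_Exw[OF e])
    moreover have "(0::real) \<le> (1/2)^(k+1)" by simp
    ultimately show ?thesis by linarith
  qed
  then have "1/2 \<le> measure ?m (\<Inter>k. ?A k)" by (intro LIMSEQ_le_const[OF lim]) auto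
  then show "1/2 \<le> measure ?m {x. \<forall>k. Cset m0 k x}" unfolding eq .
qed

lemma sqrt_half_pow: "((1/2::real)^(32 * j)) powr (1/2) = (1/2)^(16 * j)"
proof -
  have "(1/2::real)^(32 * j) = ((1/2)^(16 * j))^2" by (simp add: power_mult[symmetric])
  then show ?thesis by (simp add: powr_half_sqrt)
qed

lemma hm_F0:
  fixes eta :: real
  assumes e: "0 < eta" "eta \<le> 1/16"
  shows "hausdorff_measure (1/2) {x. \<forall>k. Cset m0 k x} = 0"
proof (rule hm_zero)
  fix \<delta> e :: real assume d: "0 < \<delta>" and ep: "0 < e"
  let ?P = "Pnu eta m0"
  have V: "validP ?P" by (rule validP_nu[OF e])
  obtain k where k: "(1/2::real)^k < min \<delta> e" using real_arch_pow_inv[of "min \<delta> e" "1/2"] d ep by auto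
  define N where "N = bpos m0 (Suc k)"
  define j where "j = jlen m0 k"
  define h where "h = (1/2::real)^(11 * j)"
  define H where "H = {w \<in> words N. h \<le> W ?P N w}"
  have hpos: "0 < h" by (simp add: h_def)
  have Nj: "32 * j \<le> N" by (simp add: N_def j_def bpos_Suc2)
  have Nk: "k \<le> N" using bpos_ge[of "Suc k" m0] by (simp add: N_def)
  have jk: "k \<le> 5 * j" using jlen_ge[of k m0] by (simp add: j_def)
  have finH: "finite H" by (simp add: H_def finite_words)
  have cov: "{x. \<forall>k. Cset m0 k x} \<subseteq> \<Union> (cyl N ` H)"
  proof
    fix x assume "x \<in> {x. \<forall>k. Cset m0 k x}"
    then have C: "Cset m0 (Suc k) x" by (simp del: Cset.simps)
    have "h \<le> W ?P N x" using heavy[OF e C] by (simp add: h_def j_def N_def)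
    also have "W ?P N x = W ?P N (trunc N x)" by (rule W_dep[OF V]) (simp add: trunc_def)
    finally have "trunc N x \<in> H" using trunc_words[of N x] by (simp add: H_def)
    moreover have "x \<in> cyl N (trunc N x)" by (simp add: cyl_def trunc_def)
    ultimately show "x \<in> \<Union> (cyl N ` H)" by blast
  qed
  have cardH: "real (card H) \<le> 2^(11 * j)"
  proof -
    have "real (card H) * h = (\<Sum>w\<in>H. h)" by simp
    also have "\<dots> \<le> (\<Sum>w\<in>H. W ?P N w)" by (rule sum_mono) (simp add: H_def)
    also have "\<dots> \<le> (\<Sum>w\<in>words N. W ?P N w)"
      by (rule sum_mono2) (auto simp: H_def finite_words intro: less_imp_le W_pos[OF V])
    also have "\<dots> = 1" by (rule sum_W[OF V])
    finally have "real (card H) * h \<le> 1" .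
    then have "real (card H) \<le> 1 / h" using hpos by (simp add: field_simps)
    also have "1 / h = 2^(11 * j)" by (simp add: h_def power_divide)
    finally show ?thesis .
  qed
  have "hausdorff_delta (1/2) \<delta> {x. \<forall>k. Cset m0 k x} \<le> ennreal (\<Sum>U\<in>cyl N ` H. cdiam U powr (1/2))"
  proof (rule hd_finite_cover[OF _ cov])
    show "finite (cyl N ` H)" using finH by simp
    fix U assume "U \<in> cyl N ` H"
    then obtain w where U: "U = cyl N w" by auto
    have p: "(1/2::real)^N \<le> (1/2)^k" using Nk by (intro power_decreasing) auto
    have c: "cdiam U \<le> (1/2)^N" using U cdiam_cyl[of N w] by simp
    have "min \<delta> e \<le> \<delta>" by simp
    then show "cdiam U \<le> \<delta>" using c p k by linarith
  qed (use d in simp)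
  also have "\<dots> \<le> ennreal e"
  proof (rule ennreal_leI)
    have "(\<Sum>U\<in>cyl N ` H. cdiam U powr (1/2)) \<le> (\<Sum>U\<in>cyl N ` H. (1/2::real)^(16 * j))"
    proof (rule sum_mono)
      fix U assume "U \<in> cyl N ` H"
      then obtain w where U: "U = cyl N w" by auto
      have "cdiam U \<le> (1/2)^(32 * j)"
      proof -
        have p: "(1/2::real)^N \<le> (1/2)^(32 * j)" using Nj by (intro power_decreasing) auto
        show ?thesis unfolding U by (rule order_trans[OF cdiam_cyl p])
      qed
      then have "cdiam U powr (1/2) \<le> ((1/2::real)^(32 * j)) powr (1/2)"
        by (intro powr_mono2) (auto intro: cdiam_nonneg)
      then show "cdiam U powr (1/2) \<le> (1/2::real)^(16 * j)" by (simp add: sqrt_half_pow)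
    qed
    also have "\<dots> = real (card (cyl N ` H)) * (1/2)^(16 * j)" by simp
    also have "\<dots> \<le> real (card H) * (1/2)^(16 * j)"
      using card_image_le[OF finH, of "cyl N"] by (intro mult_right_mono) auto
    also have "\<dots> \<le> 2^(11 * j) * (1/2)^(16 * j)" using cardH by (intro mult_right_mono) auto
    also have "(2::real)^(11 * j) * (1/2)^(16 * j) = (1/2)^(5 * j)"
    proof -
      have "(1/2::real)^(16 * j) = (1/2)^(11 * j) * (1/2)^(5 * j)" by (simp add: power_add[symmetric])
      moreover have "(2::real)^(11 * j) * (1/2)^(11 * j) = 1" by (simp add: power_mult_distrib[symmetric])
      ultimately show ?thesis by (simp add: mult.assoc[symmetric])
    qed
    also have "\<dots> \<le> (1/2)^k" using jk by (intro power_decreasing) auto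
    also have "\<dots> \<le> e" using k by simp
    finally show "(\<Sum>U\<in>cyl N ` H. cdiam U powr (1/2)) \<le> e" .
  qed
  finally show "hausdorff_delta (1/2) \<delta> {x. \<forall>k. Cset m0 k x} \<le> ennreal e" .
qed

lemma lower_dim_nu:
  assumes e: "0 < eta" "eta \<le> 1/16" "rho eta ^ m0 \<le> 1/2"
  shows "lower_dim (mkm (Pnu eta m0)) \<le> 1/2"
proof -
  let ?m = "mkm (Pnu eta m0)"
  let ?F = "{x. \<forall>k. Cset m0 k x}"
  have V: "validP (Pnu eta m0)" by (rule validP_nu[OF e(1,2)])
  interpret prob_space ?m by (rule mkm_prob[OF V])
  have F: "?F \<in> sets ?m" "1/2 \<le> measure ?m ?F" by (rule nu_F0[OF e])+
  have pos: "0 < emeasure ?m ?F" using F by (simp add: emeasure_eq_measure)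
  have mem: "hausdorff_dim ?F \<in> {hausdorff_dim E | E. E \<in> sets ?m \<and> 0 < emeasure ?m E}"
    using F(1) pos by blast
  have bdd: "bdd_below {hausdorff_dim E | E. E \<in> sets ?m \<and> 0 < emeasure ?m E}"
    by (rule bdd_belowI[of _ 0]) (auto intro: hdim_nonneg)
  have "lower_dim ?m \<le> hausdorff_dim ?F"
    unfolding lower_dim_def by (rule cInf_lower[OF mem bdd])
  also have "\<dots> \<le> 1/2" by (rule hdim_le) (auto intro: hm_F0[OF e(1,2)])
  finally show ?thesis .
qed

theorem mainTheorem7:
  fixes \<epsilon> :: real
  assumes "\<epsilon> > 0"
  shows "\<exists>\<mu> \<nu>. borel_prob \<mu> \<and> borel_prob \<nu> \<and> doubling \<mu> \<and> doubling \<nu> \<and>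
     (\<exists>\<delta><\<epsilon>. \<forall>n\<ge>1. \<forall>x.
        \<bar>ln (measure \<mu> (cyl n x) / measure \<mu> (cyl (n-1) x))
         - ln (measure \<nu> (cyl n x) / measure \<nu> (cyl (n-1) x))\<bar> \<le> \<delta>) \<and>
     \<bar>lower_dim \<mu> - lower_dim \<nu>\<bar> > 1/4"
proof -
  define eta where "eta = min (1/16) (\<epsilon>/16)"
  have e1: "0 < eta" "eta \<le> 1/16" using assms by (auto simp: eta_def)
  have r0: "0 < rho eta" by (rule rho_pos[OF e1])
  have r1: "rho eta < 1" using e1 by (simp add: rho_def)
  obtain m0 where m0: "rho eta ^ m0 < 1/2" using real_arch_pow_inv[OF _ r1, of "1/2"] by auto
  have e: "0 < eta" "eta \<le> 1/16" "rho eta ^ m0 \<le> 1/2" using e1 m0 by auto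
  have Vm: "validP (Pmu eta m0)" by (rule validP_mu[OF e1])
  have Vn: "validP (Pnu eta m0)" by (rule validP_nu[OF e1])
  let ?\<mu> = "mkm (Pmu eta m0)"
  let ?\<nu> = "mkm (Pnu eta m0)"
  define \<delta> where "\<delta> = ln ((1/2 + eta) / (1/2 - eta))"
  have bp: "borel_prob ?\<mu>" "borel_prob ?\<nu>"
    unfolding borel_prob_def using mkm_prob[OF Vm] mkm_prob[OF Vn] by (simp_all add: sets_mkm)
  have db: "doubling ?\<mu>" "doubling ?\<nu>"
    unfolding Pmu_def Pnu_def using e1 by (intro doubling_Pf; simp)+
  have dlt: "\<delta> < \<epsilon>"
  proof -
    have "\<delta> \<le> 5 * eta" unfolding \<delta>_def by (rule delta_small[OF e1])
    also have "\<dots> \<le> 5 * (\<epsilon>/16)" by (simp add: eta_def)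
    finally show ?thesis using assms by simp
  qed
  have lr: "\<forall>n\<ge>1. \<forall>x. \<bar>ln (measure ?\<mu> (cyl n x) / measure ?\<mu> (cyl (n-1) x))
         - ln (measure ?\<nu> (cyl n x) / measure ?\<nu> (cyl (n-1) x))\<bar> \<le> \<delta>"
  proof (intro allI impI)
    fix n :: nat and x assume n: "1 \<le> n"
    show "\<bar>ln (measure ?\<mu> (cyl n x) / measure ?\<mu> (cyl (n-1) x))
         - ln (measure ?\<nu> (cyl n x) / measure ?\<nu> (cyl (n-1) x))\<bar> \<le> \<delta>"
      unfolding ratio_cp[OF Vm n] ratio_cp[OF Vn n] \<delta>_def by (rule cp_mu_nu[OF e1])
  qed
  have ld: "4/5 \<le> lower_dim ?\<mu>" "lower_dim ?\<nu> \<le> 1/2"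
    by (rule lower_dim_mu[OF e], rule lower_dim_nu[OF e])
  have "\<bar>lower_dim ?\<mu> - lower_dim ?\<nu>\<bar> > 1/4" using ld by linarith
  then show ?thesis using bp db dlt lr by blast
qed

end
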